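(* Let $F$ be a distribution on $[0,\infty)$ (the particle lifetime distribution of a sub-critical age-dependent branching process), let $A=h'(1)\in(0,1)$ where $h$ is the particle production generating function, and let $$A(t)=\mathbf E Z(t)=(1-A)\sum_{n=1}^\infty A^{n-1}\big(1-F^{*n}(t)\big),\quad t\ge0,$$ where $Z(t)$ is the number of particles at time $t$. Let $0<T\le\infty$, $\Delta=(0,T]$ (with the convention $A(t+T)=0$ if $T=\infty$), and assume $F\in\mathcal L_\Delta$. Then $F\in\mathcal S_\Delta$ if and only if $A(t)-A(t+T)\sim F(t+\Delta)/(1-A)$ as $t\to\infty$.
   Context: $F^{*n}(t)=F^{*n}(-\infty,t]$ is the $n$-fold convolution distribution function. For $0<T\le\infty$, $t+\Delta=(t,t+T]$. $F\in\mathcal L_\Delta$ means $F(x+\Delta)>0$ for all large $x$ and $F(x+s+\Delta)/F(x+\Delta)\to1$ as $x\to\infty$ uniformly in $s\in[0,1]$. A distribution $F$ on $[0,\infty)$ with unbounded support is in $\mathcal S_\Delta$ if $F\in\mathcal L_\Delta$ and $(F*F)(x+\Delta)\sim2F(x+\Delta)$. $a\sim b$ means $a/b\to1$. *)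

theory Defs
  imports "HOL-Probability.Probability" "HOL-Probability.Convolution" "HOL-Library.Landau_Symbols"
begin

primrec conv_pow :: "real measure \<Rightarrow> nat \<Rightarrow> real measure" where
  "conv_pow F 0 = return borel 0"
| "conv_pow F (Suc n) = convolution F (conv_pow F n)"

definition distr_nonneg :: "real measure \<Rightarrow> bool" where
  "distr_nonneg F \<longleftrightarrow> prob_space F \<and> sets F = sets borel \<and> measure F {..<0} = 0"

definition shift_int :: "real \<Rightarrow> ereal \<Rightarrow> real set" where
  "shift_int x T = {y. x < y \<and> ereal y \<le> ereal x + T}"

definition mDelta :: "real measure \<Rightarrow> ereal \<Rightarrow> real \<Rightarrow> real" where
  "mDelta F T x = measure F (shift_int x T)"

definition class_L :: "ereal \<Rightarrow> real measure \<Rightarrow> bool" where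
  "class_L T F \<longleftrightarrow>
     (eventually (\<lambda>x. mDelta F T x > 0) at_top) \<and>
     (\<forall>\<epsilon>>0. eventually (\<lambda>x. \<forall>s\<in>{0..1}.
         \<bar>mDelta F T (x + s) / mDelta F T x - 1\<bar> < \<epsilon>) at_top)"

definition class_S :: "ereal \<Rightarrow> real measure \<Rightarrow> bool" where
  "class_S T F \<longleftrightarrow> (\<forall>x. measure F {x<..} > 0) \<and> class_L T F \<and>
     ((\<lambda>x. mDelta (convolution F F) T x) \<sim>[at_top] (\<lambda>x. 2 * mDelta F T x))"

definition mean_fun :: "real measure \<Rightarrow> real \<Rightarrow> real \<Rightarrow> real" where
  "mean_fun F a t = (1 - a) * (\<Sum>n. a ^ n * (1 - measure (conv_pow F (Suc n)) {..t}))"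

definition mean_diff :: "real measure \<Rightarrow> real \<Rightarrow> ereal \<Rightarrow> real \<Rightarrow> real" where
  "mean_diff F a T t = (if T = \<infinity> then mean_fun F a t
                        else mean_fun F a t - mean_fun F a (t + real_of_ereal T))"

end

theory Submission
  imports Defs
begin

lemma shift_int_eq:
  assumes "0 < T"
  shows "shift_int x T = (if T = \<infinity> then {x<..} else {x<..x + real_of_ereal T})"
  using assms by (cases T) (auto simp: shift_int_def)

lemma shift_int_sets[simp, intro]: "0 < T \<Longrightarrow> shift_int x T \<in> sets borel"
  by (simp add: shift_int_eq)

lemma shift_int_shift: "0 < T \<Longrightarrow> (z + y \<in> shift_int x T) = (y \<in> shift_int (x - z) T)"
  by (auto simp: shift_int_eq)

lemma shift_int_shift': "0 < T \<Longrightarrow> (y + z \<in> shift_int x T) = (y \<in> shift_int (x - z) T)"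
  by (auto simp: shift_int_eq)

lemma pair_measure_fst:
  assumes "finite_measure P" "finite_measure Q"
     and A: "A \<in> sets (P \<Otimes>\<^sub>M Q)"
  shows "integrable P (\<lambda>x. measure Q (Pair x -` A))"
    and "measure (P \<Otimes>\<^sub>M Q) A = (\<integral>x. measure Q (Pair x -` A) \<partial>P)"
proof -
  interpret P: finite_measure P by fact
  interpret Q: finite_measure Q by fact
  have m: "(\<lambda>x. measure Q (Pair x -` A)) \<in> borel_measurable P"
    unfolding measure_def by (intro borel_measurable_enn2real Q.measurable_emeasure_Pair A)
  show i: "integrable P (\<lambda>x. measure Q (Pair x -` A))"
    by (intro P.integrable_const_bound[where B="measure Q (space Q)"] m) (auto intro: Q.bounded_measure)
  have "emeasure (P \<Otimes>\<^sub>M Q) A = (\<integral>\<^sup>+x. emeasure Q (Pair x -` A) \<partial>P)"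
    by (rule Q.emeasure_pair_measure_alt[OF A])
  also have "\<dots> = (\<integral>\<^sup>+x. ennreal (measure Q (Pair x -` A)) \<partial>P)"
    by (simp add: Q.emeasure_eq_measure)
  also have "\<dots> = ennreal (\<integral>x. measure Q (Pair x -` A) \<partial>P)"
    by (rule nn_integral_eq_integral[OF i]) simp
  finally show "measure (P \<Otimes>\<^sub>M Q) A = (\<integral>x. measure Q (Pair x -` A) \<partial>P)"
    unfolding measure_def by simp
qed

lemma pair_measure_snd:
  assumes "finite_measure P" "finite_measure Q"
     and A: "A \<in> sets (P \<Otimes>\<^sub>M Q)"
  shows "integrable Q (\<lambda>y. measure P ((\<lambda>x. (x, y)) -` A))"
    and "measure (P \<Otimes>\<^sub>M Q) A = (\<integral>y. measure P ((\<lambda>x. (x, y)) -` A) \<partial>Q)"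
proof -
  interpret P: finite_measure P by fact
  interpret Q: finite_measure Q by fact
  interpret PQ: pair_sigma_finite P Q ..
  interpret QP: pair_sigma_finite Q P ..
  let ?A = "(\<lambda>(x, y). (y, x)) -` A \<inter> space (Q \<Otimes>\<^sub>M P)"
  have A': "?A \<in> sets (Q \<Otimes>\<^sub>M P)"
    by (rule measurable_sets[OF measurable_pair_swap' A])
  have eq: "\<And>y. Pair y -` ?A = (\<lambda>x. (x, y)) -` A"
    using sets.sets_into_space[OF A] by (auto simp: space_pair_measure)
  have "measure (P \<Otimes>\<^sub>M Q) A = measure (Q \<Otimes>\<^sub>M P) ?A"
    by (subst PQ.distr_pair_swap) (simp add: measure_distr[OF measurable_pair_swap' A])
  then show "measure (P \<Otimes>\<^sub>M Q) A = (\<integral>y. measure P ((\<lambda>x. (x, y)) -` A) \<partial>Q)"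
    using pair_measure_fst(2)[OF assms(2,1) A'] unfolding eq by simp
  show "integrable Q (\<lambda>y. measure P ((\<lambda>x. (x, y)) -` A))"
    using pair_measure_fst(1)[OF assms(2,1) A'] unfolding eq by simp
qed

lemma conv_pair:
  fixes P Q :: "real measure"
  assumes "sets P = sets borel" "sets Q = sets borel" "B \<in> sets borel"
  shows "{p. fst p + snd p \<in> B} \<in> sets (P \<Otimes>\<^sub>M Q)"
    and "measure (P \<star> Q) B = measure (P \<Otimes>\<^sub>M Q) {p. fst p + snd p \<in> B}"
proof -
  have sp: "space (P \<Otimes>\<^sub>M Q) = UNIV"
    using assms by (simp add: space_pair_measure sets_eq_imp_space_eq)
  have m0: "(\<lambda>(x, y). x + y) \<in> measurable (borel \<Otimes>\<^sub>M borel) (borel :: real measure)"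
    by measurable
  have m: "(\<lambda>(x, y). x + y) \<in> measurable (P \<Otimes>\<^sub>M Q) (borel :: real measure)"
    unfolding measurable_cong_sets[OF sets_pair_measure_cong[OF assms(1,2)] refl] by (rule m0)
  have eq: "(\<lambda>(x, y). x + y) -` B \<inter> space (P \<Otimes>\<^sub>M Q) = {p. fst p + snd p \<in> B}"
    using sp by auto
  show "{p. fst p + snd p \<in> B} \<in> sets (P \<Otimes>\<^sub>M Q)"
    using measurable_sets[OF m assms(3)] eq by simp
  show "measure (P \<star> Q) B = measure (P \<Otimes>\<^sub>M Q) {p. fst p + snd p \<in> B}"
    unfolding convolution_def using measure_distr[OF m assms(3)] eq by simp
qed

lemma conv_formula:
  fixes P Q :: "real measure"
  assumes "finite_measure P" "finite_measure Q" "sets P = sets borel" "sets Q = sets borel" "B \<in> sets borel"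
  shows "integrable P (\<lambda>x. measure Q {y. x + y \<in> B})"
    and "measure (P \<star> Q) B = (\<integral>x. measure Q {y. x + y \<in> B} \<partial>P)"
proof -
  have eq: "\<And>x. Pair x -` {p. fst p + snd p \<in> B} = {y. x + y \<in> B}" by auto
  show "integrable P (\<lambda>x. measure Q {y. x + y \<in> B})"
    using pair_measure_fst(1)[OF assms(1,2) conv_pair(1)[OF assms(3-5)]] by (simp add: eq)
  show "measure (P \<star> Q) B = (\<integral>x. measure Q {y. x + y \<in> B} \<partial>P)"
    using pair_measure_fst(2)[OF assms(1,2) conv_pair(1)[OF assms(3-5)]] conv_pair(2)[OF assms(3-5)]
    by (simp add: eq)
qed

lemma dn_props:
  assumes "distr_nonneg Q"
  shows "prob_space Q" "sets Q = sets borel" "finite_measure Q" "AE x in Q. 0 \<le> x" "space Q = UNIV"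
proof -
  show P: "prob_space Q" and S: "sets Q = sets borel" using assms by (auto simp: distr_nonneg_def)
  then interpret prob_space Q by simp
  show "finite_measure Q" by unfold_locales
  show sp: "space Q = UNIV" using S by (simp add: sets_eq_imp_space_eq)
  have "{..<0::real} \<in> null_sets Q"
    using assms S by (auto simp: distr_nonneg_def emeasure_eq_measure null_sets_def)
  then show "AE x in Q. 0 \<le> x"
    by (rule AE_I') auto
qed

lemma dn_conv:
  assumes P: "distr_nonneg P" and Q: "distr_nonneg Q"
  shows "distr_nonneg (P \<star> Q)"
proof -
  note p = dn_props[OF P] and q = dn_props[OF Q]
  interpret pp: pair_prob_space P Q
    using p(1) q(1) by (simp add: pair_prob_space_def pair_sigma_finite_def prob_space_imp_sigma_finite)
  have m0: "(\<lambda>(x, y). x + y) \<in> measurable (borel \<Otimes>\<^sub>M borel) (borel :: real measure)"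
    by measurable
  have m: "(\<lambda>(x, y). x + y) \<in> measurable (P \<Otimes>\<^sub>M Q) (borel :: real measure)"
    unfolding measurable_cong_sets[OF sets_pair_measure_cong[OF p(2) q(2)] refl] by (rule m0)
  have ps: "prob_space (P \<star> Q)"
    unfolding convolution_def by (rule pp.prob_space_distr[OF m])
  have ae: "AE x in P. measure Q {y. x + y \<in> {..<0}} = 0"
    using p(4)
  proof (eventually_elim)
    case (elim x)
    have "measure Q {y. x + y \<in> {..<0}} \<le> measure Q {..<0}"
      using elim q(2) by (intro finite_measure.finite_measure_mono[OF q(3)]) auto
    then show ?case using Q measure_nonneg[of Q] unfolding distr_nonneg_def
      by (metis order_antisym)
  qed
  have "measure (P \<star> Q) {..<0} = 0"
    using conv_formula(2)[OF p(3) q(3) p(2) q(2), of "{..<0}"] integral_eq_zero_AE[OF ae] by simp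
  then show ?thesis using ps by (simp add: distr_nonneg_def)
qed

lemma dn_return: "distr_nonneg (return borel (0::real))"
  by (simp add: distr_nonneg_def prob_space_return measure_return)

lemma dn_conv_pow: "distr_nonneg F \<Longrightarrow> distr_nonneg (conv_pow F n)"
  by (induction n) (auto intro: dn_conv dn_return)

lemma conv_dist:
  assumes P: "distr_nonneg P" and Q: "distr_nonneg Q" and T: "0 < T"
  shows "integrable P (\<lambda>x. mDelta Q T (t - x))"
    and "mDelta (P \<star> Q) T t = (\<integral>x. mDelta Q T (t - x) \<partial>P)"
proof -
  note p = dn_props[OF P] and q = dn_props[OF Q]
  have eq: "\<And>x. {y. x + y \<in> shift_int t T} = shift_int (t - x) T"
    using shift_int_shift[OF T] by auto
  show "integrable P (\<lambda>x. mDelta Q T (t - x))"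
    using conv_formula(1)[OF p(3) q(3) p(2) q(2) shift_int_sets[OF T, of t]]
    unfolding eq mDelta_def .
  show "mDelta (P \<star> Q) T t = (\<integral>x. mDelta Q T (t - x) \<partial>P)"
    using conv_formula(2)[OF p(3) q(3) p(2) q(2) shift_int_sets[OF T, of t]]
    unfolding eq mDelta_def .
qed

lemma dn_tail:
  assumes Q: "distr_nonneg Q" and e: "0 < e"
  shows "\<exists>X\<ge>0. \<forall>x\<ge>X. 1 - e \<le> measure Q {..<x} \<and> measure Q {x..} \<le> e"
proof -
  note q = dn_props[OF Q]
  interpret real_distribution Q unfolding real_distribution_def real_distribution_axioms_def
    using q(1,2) by simp
  have "eventually (\<lambda>x. cdf Q x > 1 - e) at_top"
    using cdf_lim_at_top_prob e by (intro order_tendstoD(1)) auto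
  then obtain N where N: "\<And>x. x \<ge> N \<Longrightarrow> cdf Q x > 1 - e"
    unfolding eventually_at_top_linorder by blast
  have "\<forall>x\<ge>max 0 N + 1. 1 - e \<le> measure Q {..<x} \<and> measure Q {x..} \<le> e"
  proof (intro allI impI)
    fix x :: real assume x: "max 0 N + 1 \<le> x"
    have "cdf Q N \<le> measure Q {..<x}"
      unfolding cdf_def using x q(2) by (intro finite_measure_mono) auto
    with N[of N] have l: "1 - e \<le> measure Q {..<x}" by simp
    have "{x..} = space Q - {..<x}" using q(5) by auto
    then have "measure Q {x..} = measure Q (space Q - {..<x})" by simp
    also have "\<dots> = 1 - measure Q {..<x}"
      using q(2) by (intro prob_compl) auto
    finally show "1 - e \<le> measure Q {..<x} \<and> measure Q {x..} \<le> e" using l by simp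
  qed
  then show ?thesis by (intro exI[of _ "max 0 N + 1"]) simp
qed

lemma ratio_bounds:
  fixes p q e :: real
  assumes "0 < e" "e < 1" "0 < p" "0 \<le> q" "\<bar>q / p - 1\<bar> < e"
  shows "(1 - e) * p \<le> q" "(1 - e) * q \<le> p"
proof -
  have a: "q / p < 1 + e" "1 - e < q / p" using assms(5) by (auto simp: abs_less_iff)
  have b: "q < (1 + e) * p" using a(1) assms(3) by (simp add: pos_divide_less_eq)
  have c: "(1 - e) * p < q" using a(2) assms(3) by (simp add: pos_less_divide_eq)
  then show "(1 - e) * p \<le> q" by simp
  have "(1 - e) * q \<le> (1 - e) * ((1 + e) * p)"
    using b assms(2) by (intro mult_left_mono) auto
  also have "\<dots> = p - e * e * p" by (simp add: algebra_simps)
  also have "\<dots> \<le> p" using assms by simp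
  finally show "(1 - e) * q \<le> p" .
qed

lemma chain_bound:
  fixes f :: "real \<Rightarrow> real"
  assumes e: "0 < e" "e < 1"
    and y0: "\<forall>y\<ge>y0. f y > 0 \<and> (\<forall>s\<in>{0..1}. \<bar>f (y + s) / f y - 1\<bar> < e)"
    and nonneg: "\<And>x. f x \<ge> 0"
  shows "y \<ge> y0 \<Longrightarrow> 0 \<le> s \<Longrightarrow> s \<le> real n \<Longrightarrow>
    (1 - e) ^ n * f y \<le> f (y + s) \<and> (1 - e) ^ n * f (y + s) \<le> f y"
proof (induction n arbitrary: y s)
  case 0
  then show ?case by simp
next
  case (Suc n)
  have base: "\<And>y s. y \<ge> y0 \<Longrightarrow> 0 \<le> s \<Longrightarrow> s \<le> 1 \<Longrightarrow>
      (1 - e) * f y \<le> f (y + s) \<and> (1 - e) * f (y + s) \<le> f y"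
  proof -
    fix y s :: real assume h: "y \<ge> y0" "0 \<le> s" "s \<le> 1"
    then have "f y > 0" "\<bar>f (y + s) / f y - 1\<bar> < e" using y0 by auto
    then show "(1 - e) * f y \<le> f (y + s) \<and> (1 - e) * f (y + s) \<le> f y"
      using ratio_bounds[OF e _ nonneg] by auto
  qed
  have pw: "(1 - e) ^ Suc n \<le> 1 - e"
  proof -
    have "(1 - e) ^ n \<le> 1" using e by (intro power_le_one) auto
    then have "(1 - e) * (1 - e) ^ n \<le> (1 - e) * 1" using e by (intro mult_left_mono) auto
    then show ?thesis by simp
  qed
  have pw0: "0 \<le> (1 - e) ^ n" using e by simp
  show ?case
  proof (cases "Suc n = 1 \<or> s \<le> 1")
    case True
    then have s1: "s \<le> 1" using Suc.prems by auto
    from base[OF Suc.prems(1,2) s1] have B: "(1 - e) * f y \<le> f (y + s)" "(1 - e) * f (y + s) \<le> f y" by auto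
    have "(1 - e) ^ Suc n * f y \<le> (1 - e) * f y" using pw nonneg[of y] by (intro mult_right_mono) auto
    moreover have "(1 - e) ^ Suc n * f (y + s) \<le> (1 - e) * f (y + s)" using pw nonneg[of "y + s"] by (intro mult_right_mono) auto
    ultimately show ?thesis using B by linarith
  next
    case False
    then have s1: "s > 1" by auto
    define s' where "s' = s - 1"
    have s': "0 \<le> s'" "s' \<le> real n" using s1 Suc.prems unfolding s'_def by auto
    have IH: "(1 - e) ^ n * f (y + 1) \<le> f (y + 1 + s') \<and> (1 - e) ^ n * f (y + 1 + s') \<le> f (y + 1)"
      using Suc.IH[of "y + 1" s'] Suc.prems s' by auto
    have B: "(1 - e) * f y \<le> f (y + 1)" "(1 - e) * f (y + 1) \<le> f y"
      using base[OF Suc.prems(1), of 1] by auto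
    have eq: "y + 1 + s' = y + s" unfolding s'_def by simp
    have "(1 - e) ^ Suc n * f y = (1 - e) ^ n * ((1 - e) * f y)" by simp
    also have "\<dots> \<le> (1 - e) ^ n * f (y + 1)" using B(1) pw0 by (intro mult_left_mono)
    also have "\<dots> \<le> f (y + s)" using IH eq by simp
    finally have r1: "(1 - e) ^ Suc n * f y \<le> f (y + s)" .
    have "(1 - e) ^ Suc n * f (y + s) = (1 - e) * ((1 - e) ^ n * f (y + 1 + s'))" unfolding eq by simp
    also have "\<dots> \<le> (1 - e) * f (y + 1)" using IH e by (intro mult_left_mono) auto
    also have "\<dots> \<le> f y" using B(2) .
    finally show ?thesis using r1 by simp
  qed
qed

lemma unif_local:
  fixes f :: "real \<Rightarrow> real"
  assumes nonneg: "\<And>x. f x \<ge> 0"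
    and L: "\<And>e. e > 0 \<Longrightarrow> \<exists>y0. \<forall>y\<ge>y0. f y > 0 \<and> (\<forall>s\<in>{0..1}. \<bar>f (y + s) / f y - 1\<bar> < e)"
    and d: "0 < d" "d < 1" and M: "0 \<le> M"
  shows "\<exists>t0. \<forall>t\<ge>t0. f t > 0 \<and> (\<forall>z\<in>{0..M}. (1 - d) * f t \<le> f (t - z) \<and> (1 - d) * f (t - z) \<le> f t)"
proof -
  define n where "n = nat \<lceil>M\<rceil>"
  have Mn: "M \<le> real n" unfolding n_def by linarith
  define e where "e = d / (real n + 1)"
  have e: "0 < e" "e < 1" using d unfolding e_def by (auto simp: field_simps)
  have ne: "real n * e \<le> d"
  proof -
    have "real n * e = d * (real n / (real n + 1))" unfolding e_def by simp
    also have "\<dots> \<le> d * 1" using d by (intro mult_left_mono) auto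
    finally show ?thesis by simp
  qed
  have bern: "1 - d \<le> (1 - e) ^ n"
  proof -
    have "1 + real n * (- e) \<le> (1 + (- e)) ^ n" using e by (intro Bernoulli_inequality) auto
    then show ?thesis using ne by simp
  qed
  obtain y0 where y0: "\<forall>y\<ge>y0. f y > 0 \<and> (\<forall>s\<in>{0..1}. \<bar>f (y + s) / f y - 1\<bar> < e)"
    using L[OF e(1)] by blast
  show ?thesis
  proof (intro exI[of _ "y0 + M"] allI impI conjI ballI)
    fix t assume t: "y0 + M \<le> t"
    then show "f t > 0" using y0 M by auto
    fix z assume z: "z \<in> {0..M}"
    have C: "(1 - e) ^ n * f (t - z) \<le> f (t - z + z) \<and> (1 - e) ^ n * f (t - z + z) \<le> f (t - z)"
      using chain_bound[OF e y0 nonneg, of "t - z" z n] t z Mn by auto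
    have "(1 - d) * f t \<le> (1 - e) ^ n * f t" using bern nonneg[of t] by (intro mult_right_mono)
    then show "(1 - d) * f t \<le> f (t - z)" using C by simp
    have "(1 - d) * f (t - z) \<le> (1 - e) ^ n * f (t - z)" using bern nonneg[of "t - z"] by (intro mult_right_mono)
    then show "(1 - d) * f (t - z) \<le> f t" using C by simp
  qed
qed

lemma ind_const:
  assumes "finite_measure Q" "A \<in> sets Q"
  shows "integrable Q (\<lambda>y. indicator A y * c)" "(\<integral>y. indicator A y * c \<partial>Q) = c * measure Q A"
proof -
  interpret finite_measure Q by fact
  show "integrable Q (\<lambda>y. indicator A y * c)"
    using assms(2) by (intro integrable_const_bound[where B="\<bar>c\<bar>"]) (auto simp: indicator_def)
  show "(\<integral>y. indicator A y * c \<partial>Q) = c * measure Q A"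
    using assms(2) sets.sets_into_space[OF assms(2)] by (simp add: Int_absorb2)
qed

lemma pair_set:
  fixes P Q :: "real measure"
  assumes "sets P = sets borel" "sets Q = sets borel" "B \<in> sets borel" "X \<in> sets borel" "Y \<in> sets borel"
  shows "{p. fst p + snd p \<in> B \<and> fst p \<in> X \<and> snd p \<in> Y} \<in> sets (P \<Otimes>\<^sub>M Q)"
proof -
  have "{p. fst p + snd p \<in> B \<and> fst p \<in> X \<and> snd p \<in> Y} = {p. fst p + snd p \<in> B} \<inter> (X \<times> Y)"
    by auto
  moreover have "X \<times> Y \<in> sets (P \<Otimes>\<^sub>M Q)" using assms by (intro pair_measureI) auto
  ultimately show ?thesis using conv_pair(1)[OF assms(1-3)] by auto
qed

locale LT =
  fixes F :: "real measure" and T :: ereal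
  assumes dnF: "distr_nonneg F" and Tpos: "0 < T" and LF: "class_L T F"

context LT
begin

lemma f_nonneg: "0 \<le> mDelta Q T x"
  by (simp add: mDelta_def)

lemma L0: "e > 0 \<Longrightarrow> \<exists>y0. \<forall>y\<ge>y0. mDelta F T y > 0 \<and> (\<forall>s\<in>{0..1}. \<bar>mDelta F T (y + s) / mDelta F T y - 1\<bar> < e)"
proof -
  assume e: "e > 0"
  have "eventually (\<lambda>x. mDelta F T x > 0 \<and> (\<forall>s\<in>{0..1}. \<bar>mDelta F T (x + s) / mDelta F T x - 1\<bar> < e)) at_top"
    using LF e unfolding class_L_def by (intro eventually_conj) auto
  then show ?thesis unfolding eventually_at_top_linorder by blast
qed

lemma UL:
  assumes "0 < d" "d < 1" "0 \<le> M"
  shows "\<exists>t0. \<forall>t\<ge>t0. mDelta F T t > 0 \<and> (\<forall>z\<in>{0..M}. (1 - d) * mDelta F T t \<le> mDelta F T (t - z) \<and> (1 - d) * mDelta F T (t - z) \<le> mDelta F T t)"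
  by (rule unif_local[OF f_nonneg L0 assms])

lemma pre_fst:
  "Pair x -` {p. fst p + snd p \<in> shift_int t T \<and> fst p \<in> X \<and> snd p \<in> Y} =
    (if x \<in> X then shift_int (t - x) T \<inter> Y else {})"
  using shift_int_shift[OF Tpos] by auto

lemma pre_snd:
  "(\<lambda>x. (x, y)) -` {p. fst p + snd p \<in> shift_int t T \<and> fst p \<in> X \<and> snd p \<in> Y} =
    (if y \<in> Y then shift_int (t - y) T \<inter> X else {})"
  using shift_int_shift'[OF Tpos] by auto

end

lemma arith1:
  fixes \<eta> c c' c1 :: real
  assumes "0 < \<eta>" "\<eta> \<le> 1/2" "\<eta> * (3 + 2 * c) \<le> 1 + c - c'" "0 \<le> c" "c - \<eta> \<le> c1" "0 \<le> c1"
  shows "c' \<le> (1 - \<eta>)^2 * (1 + c1)"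
proof -
  have e: "(1 - 2*\<eta>) * (1 + c - \<eta>) = 1 + c - \<eta> * (3 + 2 * c) + 2 * \<eta>^2"
    by (simp add: algebra_simps power2_eq_square)
  have "0 \<le> \<eta>^2" by simp
  then have c: "c' \<le> (1 - 2*\<eta>) * (1 + c - \<eta>)" using e assms(3) by linarith
  have a: "(1 - 2*\<eta>) * (1 + c - \<eta>) \<le> (1 - \<eta>)^2 * (1 + c - \<eta>)"
    using assms by (intro mult_right_mono) (auto simp: power2_eq_square algebra_simps)
  have b: "(1 - \<eta>)^2 * (1 + c - \<eta>) \<le> (1 - \<eta>)^2 * (1 + c1)"
    using assms by (intro mult_left_mono) auto
  show ?thesis using a b c by linarith
qed

lemma shift_int_gt: "y \<in> shift_int s T \<Longrightarrow> s < y"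
  by (simp add: shift_int_def)

context LT begin

lemma LB:
  assumes Q: "distr_nonneg Q" and c: "0 \<le> c"
    and H: "\<And>c'. c' < c \<Longrightarrow> eventually (\<lambda>t. c' * mDelta F T t \<le> mDelta Q T t) at_top"
    and c': "c' < 1 + c"
  shows "eventually (\<lambda>t. c' * mDelta F T t \<le> mDelta (F \<star> Q) T t) at_top"
proof -
  note p = dn_props[OF dnF] and q = dn_props[OF Q]
  define \<eta> where "\<eta> = min (1/2) ((1 + c - c') / (3 + 2 * c))"
  have "0 < (1 + c - c') / (3 + 2 * c)" using c c' by (intro divide_pos_pos) auto
  then have eta0a: "0 < \<eta>" unfolding \<eta>_def by simp
  have eta0b: "\<eta> \<le> 1/2" unfolding \<eta>_def by (rule min.cobounded1)
  note eta0 = eta0a eta0b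
  have "\<eta> \<le> (1 + c - c') / (3 + 2 * c)" by (simp add: \<eta>_def)
  then have eta3: "\<eta> * (3 + 2 * c) \<le> 1 + c - c'" using c by (simp add: pos_le_divide_eq)
  define c1 where "c1 = max 0 (c - \<eta>)"
  have c1: "0 \<le> c1" "c - \<eta> \<le> c1" by (auto simp: c1_def)
  have H1: "eventually (\<lambda>t. c1 * mDelta F T t \<le> mDelta Q T t) at_top"
  proof (cases "c - \<eta> \<le> 0")
    case True then have "c1 = 0" by (simp add: c1_def)
    then show ?thesis by (simp add: f_nonneg)
  next
    case False then have "c1 = c - \<eta>" by (simp add: c1_def)
    then show ?thesis using H[of "c - \<eta>"] eta0 by simp
  qed
  then obtain t1 where t1: "\<And>t. t \<ge> t1 \<Longrightarrow> c1 * mDelta F T t \<le> mDelta Q T t"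
    unfolding eventually_at_top_linorder by blast
  obtain M1 where M1: "M1 \<ge> 0" "\<And>x. x \<ge> M1 \<Longrightarrow> 1 - \<eta> \<le> measure F {..<x}"
    using dn_tail[OF dnF eta0(1)] by blast
  obtain M2 where M2: "M2 \<ge> 0" "\<And>x. x \<ge> M2 \<Longrightarrow> 1 - \<eta> \<le> measure Q {..<x}"
    using dn_tail[OF Q eta0(1)] by blast
  define M where "M = max M1 M2"
  have M: "0 \<le> M" "1 - \<eta> \<le> measure F {..<M}" "1 - \<eta> \<le> measure Q {..<M}"
    using M1 M2 by (auto simp: M_def)
  have eta1: "\<eta> < 1" using eta0 by simp
  obtain t0 where t0: "\<And>t. t \<ge> t0 \<Longrightarrow> mDelta F T t > 0 \<and> (\<forall>z\<in>{0..M}. (1 - \<eta>) * mDelta F T t \<le> mDelta F T (t - z) \<and> (1 - \<eta>) * mDelta F T (t - z) \<le> mDelta F T t)"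
    using UL[OF eta0(1) eta1 M(1)] by blast
  show ?thesis unfolding eventually_at_top_linorder
  proof (intro exI[of _ "max (max t0 (2 * M)) (t1 + M)"] allI impI)
    fix t assume t: "max (max t0 (2 * M)) (t1 + M) \<le> t"
    let ?S = "shift_int t T"
    let ?ft = "mDelta F T t"
    define A where "A = {p. fst p + snd p \<in> ?S \<and> fst p \<in> UNIV \<and> snd p \<in> (UNIV::real set)}"
    define A1 where "A1 = {p. fst p + snd p \<in> ?S \<and> fst p \<in> UNIV \<and> snd p \<in> {..<M}}"
    define A2 where "A2 = {p. fst p + snd p \<in> ?S \<and> fst p \<in> {..<M} \<and> snd p \<in> {M..}}"
    have sA: "A \<in> sets (F \<Otimes>\<^sub>M Q)" unfolding A_def by (rule pair_set[OF p(2) q(2)]) (use Tpos in auto)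
    have sA1: "A1 \<in> sets (F \<Otimes>\<^sub>M Q)" unfolding A1_def by (rule pair_set[OF p(2) q(2)]) (use Tpos in auto)
    have sA2: "A2 \<in> sets (F \<Otimes>\<^sub>M Q)" unfolding A2_def by (rule pair_set[OF p(2) q(2)]) (use Tpos in auto)
    note sets = sA sA1 sA2
    interpret PQ: finite_measure "F \<Otimes>\<^sub>M Q" using q(3) p(3) by (rule finite_measure_pair_measure)
    have conv: "mDelta (F \<star> Q) T t = measure (F \<Otimes>\<^sub>M Q) A"
      unfolding mDelta_def A_def using conv_pair(2)[OF p(2) q(2) shift_int_sets[OF Tpos]] by simp
    have "measure (F \<Otimes>\<^sub>M Q) (A1 \<union> A2) = measure (F \<Otimes>\<^sub>M Q) A1 + measure (F \<Otimes>\<^sub>M Q) A2"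
      using sets by (intro PQ.finite_measure_Union) (auto simp: A1_def A2_def)
    moreover have "measure (F \<Otimes>\<^sub>M Q) (A1 \<union> A2) \<le> measure (F \<Otimes>\<^sub>M Q) A"
      using sets by (intro PQ.finite_measure_mono) (auto simp: A_def A1_def A2_def)
    ultimately have split: "measure (F \<Otimes>\<^sub>M Q) A1 + measure (F \<Otimes>\<^sub>M Q) A2 \<le> mDelta (F \<star> Q) T t"
      using conv by simp
    have sM1: "{..<M} \<in> sets Q" using q(2) by simp
    have sM2: "{..<M} \<in> sets F" using p(2) by simp
    have fA1: "measure (F \<Otimes>\<^sub>M Q) A1 = (\<integral>y. measure F ((\<lambda>x. (x, y)) -` A1) \<partial>Q)"
      and iA1: "integrable Q (\<lambda>y. measure F ((\<lambda>x. (x, y)) -` A1))"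
      using pair_measure_snd[OF p(3) q(3) sets(2)] by auto
    have "(\<integral>y. indicator {..<M} y * ((1 - \<eta>) * ?ft) \<partial>Q) \<le> (\<integral>y. measure F ((\<lambda>x. (x, y)) -` A1) \<partial>Q)"
    proof (rule integral_mono_AE[OF ind_const(1)[OF q(3) sM1] iA1])
      show "AE y in Q. indicator {..<M} y * ((1 - \<eta>) * ?ft) \<le> measure F ((\<lambda>x. (x, y)) -` A1)"
        using q(4)
      proof eventually_elim
        case (elim y)
        show ?case
        proof (cases "y < M")
          case True
          have "(\<lambda>x. (x, y)) -` A1 = shift_int (t - y) T" unfolding A1_def pre_snd using True by simp
          moreover have "(1 - \<eta>) * ?ft \<le> mDelta F T (t - y)" using t0[of t] t elim True by auto
          ultimately show ?thesis using True by (simp add: mDelta_def)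
        next
          case False then show ?thesis by simp
        qed
      qed
    qed
    note ineq1 = this
    have eqI1: "(\<integral>y. indicator {..<M} y * ((1 - \<eta>) * ?ft) \<partial>Q) = ((1 - \<eta>) * ?ft) * measure Q {..<M}"
      by (rule ind_const(2)[OF q(3) sM1])
    have lA1: "((1 - \<eta>) * ?ft) * measure Q {..<M} \<le> measure (F \<Otimes>\<^sub>M Q) A1"
      using ineq1 unfolding eqI1 fA1[symmetric] .
    have fA2: "measure (F \<Otimes>\<^sub>M Q) A2 = (\<integral>x. measure Q (Pair x -` A2) \<partial>F)"
      and iA2: "integrable F (\<lambda>x. measure Q (Pair x -` A2))"
      using pair_measure_fst[OF p(3) q(3) sets(3)] by auto
    have "(\<integral>x. indicator {..<M} x * (c1 * (1 - \<eta>) * ?ft) \<partial>F) \<le> (\<integral>x. measure Q (Pair x -` A2) \<partial>F)"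
    proof (rule integral_mono_AE[OF ind_const(1)[OF p(3) sM2] iA2])
      show "AE x in F. indicator {..<M} x * (c1 * (1 - \<eta>) * ?ft) \<le> measure Q (Pair x -` A2)"
        using p(4)
      proof eventually_elim
        case (elim x)
        show ?case
        proof (cases "x < M")
          case True
          have "Pair x -` A2 = shift_int (t - x) T \<inter> {M..}" unfolding A2_def pre_fst using True by simp
          also have "\<dots> = shift_int (t - x) T"
          proof -
            have "\<And>y. y \<in> shift_int (t - x) T \<Longrightarrow> M \<le> y"
              using shift_int_gt t True by force
            then show ?thesis by auto
          qed
          finally have eq: "Pair x -` A2 = shift_int (t - x) T" .
          have "c1 * mDelta F T (t - x) \<le> mDelta Q T (t - x)" using t1[of "t - x"] t True by auto
          moreover have "c1 * ((1 - \<eta>) * ?ft) \<le> c1 * mDelta F T (t - x)"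
            using t0[of t] t elim True c1 by (intro mult_left_mono) auto
          ultimately show ?thesis using True eq by (simp add: mDelta_def mult.assoc)
        next
          case False then show ?thesis by simp
        qed
      qed
    qed
    note ineq2 = this
    have eqI2: "(\<integral>x. indicator {..<M} x * (c1 * (1 - \<eta>) * ?ft) \<partial>F) = (c1 * (1 - \<eta>) * ?ft) * measure F {..<M}"
      by (rule ind_const(2)[OF p(3) sM2])
    have lA2: "(c1 * (1 - \<eta>) * ?ft) * measure F {..<M} \<le> measure (F \<Otimes>\<^sub>M Q) A2"
      using ineq2 unfolding eqI2 fA2[symmetric] .
    have ft0: "0 \<le> ?ft" by (rule f_nonneg)
    have x1: "((1 - \<eta>) * ?ft) * (1 - \<eta>) \<le> ((1 - \<eta>) * ?ft) * measure Q {..<M}"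
      using M(3) ft0 eta1 by (intro mult_left_mono) auto
    have x2: "(c1 * (1 - \<eta>) * ?ft) * (1 - \<eta>) \<le> (c1 * (1 - \<eta>) * ?ft) * measure F {..<M}"
      using M(2) ft0 eta1 c1 by (intro mult_left_mono) auto
    have "(1 - \<eta>)^2 * (1 + c1) * ?ft = ((1 - \<eta>) * ?ft) * (1 - \<eta>) + (c1 * (1 - \<eta>) * ?ft) * (1 - \<eta>)"
      by (simp add: algebra_simps power2_eq_square)
    also have "\<dots> \<le> mDelta (F \<star> Q) T t" using x1 x2 lA1 lA2 split by linarith
    finally have up: "(1 - \<eta>)^2 * (1 + c1) * ?ft \<le> mDelta (F \<star> Q) T t" .
    have "c' * ?ft \<le> (1 - \<eta>)^2 * (1 + c1) * ?ft"
      using arith1[OF eta0 eta3 c c1(2) c1(1)] ft0 by (intro mult_right_mono)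
    then show "c' * ?ft \<le> mDelta (F \<star> Q) T t" using up by linarith
  qed
qed

end

declare conv_pow.simps[simp del]

lemma summ_geo_bounded:
  fixes a :: real
  assumes "0 \<le> a" "a < 1" "\<And>n. 0 \<le> b n" "\<And>n. b n \<le> B"
  shows "summable (\<lambda>n. a ^ n * b n)"
proof (rule summable_comparison_test'[where g="\<lambda>n. B * a ^ n" and N=0])
  show "summable (\<lambda>n. B * a ^ n)" using assms by (intro summable_mult summable_geometric) auto
  fix n :: nat
  have "a ^ n * b n \<le> a ^ n * B" using assms by (intro mult_left_mono) auto
  then show "norm (a ^ n * b n) \<le> B * a ^ n" using assms by (simp add: mult.commute)
qed

lemma summ_c_bounded:
  fixes a :: real
  assumes "0 \<le> a" "a < 1" "\<And>n. 0 \<le> b n" "\<And>n. b n \<le> B"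
  shows "summable (\<lambda>n. (1 - a) * a ^ n * b n)"
  using summable_mult[OF summ_geo_bounded[OF assms], of "1 - a"] by (simp add: mult.assoc)

definition Gm :: "real measure \<Rightarrow> real \<Rightarrow> real measure" where
  "Gm F a = measure_pmf (geometric_pmf (1 - a)) \<bind> (\<lambda>n. conv_pow F (Suc n))"

lemma G_emeasure:
  assumes F: "distr_nonneg F" and a: "0 < a" "a < 1" and B: "B \<in> sets borel"
  shows "emeasure (Gm F a) B = ennreal (\<Sum>n. (1 - a) * a ^ n * measure (conv_pow F (Suc n)) B)"
    and "summable (\<lambda>n. (1 - a) * a ^ n * measure (conv_pow F (Suc n)) B)"
    and "sets (Gm F a) = sets borel"
proof -
  note d = dn_props[OF dn_conv_pow[OF F]]
  have meas: "(\<lambda>n. conv_pow F (Suc n)) \<in> measurable (measure_pmf (geometric_pmf (1 - a))) (subprob_algebra borel)"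
  proof -
    have "\<And>n. conv_pow F (Suc n) \<in> space (subprob_algebra borel)"
      unfolding space_subprob_algebra using d(1)[of "Suc _"] d(2)[of "Suc _"]
      by (auto simp del: conv_pow.simps intro: prob_space_imp_subprob_space)
    then show ?thesis by auto
  qed
  show "sets (Gm F a) = sets borel"
    unfolding Gm_def using d by (subst sets_bind) auto
  show sm: "summable (\<lambda>n. (1 - a) * a ^ n * measure (conv_pow F (Suc n)) B)"
    using a by (intro summ_c_bounded[where B=1]) (auto intro: prob_space.prob_le_1 d(1))
  have pmf: "\<And>n. pmf (geometric_pmf (1 - a)) n = (1 - a) * a ^ n"
    using a by (subst pmf_geometric) auto
  have "emeasure (Gm F a) B = (\<integral>\<^sup>+n. emeasure (conv_pow F (Suc n)) B \<partial>measure_pmf (geometric_pmf (1 - a)))"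
    unfolding Gm_def by (rule emeasure_bind[OF _ meas B]) simp
  also have "\<dots> = (\<Sum>n. ennreal ((1 - a) * a ^ n * measure (conv_pow F (Suc n)) B))"
    unfolding nn_integral_measure_pmf nn_integral_count_space_nat pmf
    using a d(3) by (simp add: finite_measure.emeasure_eq_measure ennreal_mult)
  also have "\<dots> = ennreal (\<Sum>n. (1 - a) * a ^ n * measure (conv_pow F (Suc n)) B)"
    using sm a by (intro suminf_ennreal2) auto
  finally show "emeasure (Gm F a) B = ennreal (\<Sum>n. (1 - a) * a ^ n * measure (conv_pow F (Suc n)) B)" .
qed

lemma G_measure:
  assumes F: "distr_nonneg F" and a: "0 < a" "a < 1" and B: "B \<in> sets borel"
  shows "measure (Gm F a) B = (\<Sum>n. (1 - a) * a ^ n * measure (conv_pow F (Suc n)) B)"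
proof -
  have "0 \<le> (\<Sum>n. (1 - a) * a ^ n * measure (conv_pow F (Suc n)) B)"
    using G_emeasure(2)[OF assms] a by (intro suminf_nonneg) auto
  then show ?thesis using G_emeasure(1)[OF assms] by (simp add: measure_def)
qed

lemma G_dn:
  assumes F: "distr_nonneg F" and a: "0 < a" "a < 1"
  shows "distr_nonneg (Gm F a)"
proof -
  note d = dn_props[OF dn_conv_pow[OF F]]
  have s: "sets (Gm F a) = sets borel" using G_emeasure(3)[OF F a, of UNIV] by simp
  then have sp: "space (Gm F a) = UNIV" by (simp add: sets_eq_imp_space_eq)
  have "(\<lambda>n. (1 - a) * a ^ n) sums ((1 - a) * (1 / (1 - a)))"
    using a by (intro sums_mult geometric_sums) auto
  then have "(\<Sum>n. (1 - a) * a ^ n) = 1" using a by (simp add: sums_iff)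
  moreover have "\<And>n. measure (conv_pow F (Suc n)) UNIV = 1"
    using d by (metis prob_space.prob_space)
  ultimately have "emeasure (Gm F a) (space (Gm F a)) = 1"
    using G_emeasure(1)[OF F a, of UNIV] sp by simp
  then have ps: "prob_space (Gm F a)" by (rule prob_spaceI)
  have "\<And>n. measure (conv_pow F (Suc n)) {..<0} = 0"
    using dn_conv_pow[OF F] by (simp add: distr_nonneg_def del: conv_pow.simps)
  then have "measure (Gm F a) {..<0} = 0" using G_measure[OF F a, of "{..<0}"] by simp
  then show ?thesis using ps s by (simp add: distr_nonneg_def)
qed

lemma mDelta_le1: "distr_nonneg Q \<Longrightarrow> mDelta Q T x \<le> 1"
  unfolding mDelta_def using dn_props(1) by (blast intro: prob_space.prob_le_1)

lemma d1:
  assumes F: "distr_nonneg F" and T: "0 < T"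
  shows "mDelta (conv_pow F (Suc 0)) T t = mDelta F T t"
proof -
  have "mDelta (conv_pow F (Suc 0)) T t = (\<integral>x. mDelta (return borel 0) T (t - x) \<partial>F)"
    unfolding conv_pow.simps by (rule conv_dist(2)[OF F dn_return T])
  also have "\<dots> = (\<integral>x. indicator (shift_int t T) x \<partial>F)"
  proof (rule Bochner_Integration.integral_cong[OF refl])
    fix x
    have "(0::real) \<in> shift_int (t - x) T \<longleftrightarrow> x \<in> shift_int t T"
      using shift_int_shift'[OF T, of 0 x t] by simp
    then show "mDelta (return borel 0) T (t - x) = indicator (shift_int t T) x"
      unfolding mDelta_def using T by (simp add: measure_return indicator_def)
  qed
  also have "\<dots> = mDelta F T t"
    using dn_props[OF F] by (simp add: mDelta_def)
  finally show ?thesis .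
qed

lemma d2:
  assumes F: "distr_nonneg F" and T: "0 < T"
  shows "mDelta (conv_pow F 2) T t = mDelta (F \<star> F) T t"
proof -
  have "mDelta (conv_pow F 2) T t = (\<integral>x. mDelta (conv_pow F (Suc 0)) T (t - x) \<partial>F)"
    unfolding numeral_2_eq_2 conv_pow.simps(2)[of F "Suc 0"]
    by (rule conv_dist(2)[OF F dn_conv_pow[OF F] T])
  also have "\<dots> = (\<integral>x. mDelta F T (t - x) \<partial>F)" using d1[OF F T] by simp
  also have "\<dots> = mDelta (F \<star> F) T t" by (rule conv_dist(2)[OF F F T, symmetric])
  finally show ?thesis .
qed

lemma mean_diff_G:
  assumes F: "distr_nonneg F" and T: "0 < T" and a: "0 < a" "a < 1"
  shows "mean_diff F a T t = mDelta (Gm F a) T t"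
proof -
  note d = dn_props[OF dn_conv_pow[OF F]]
  have Gs: "mDelta (Gm F a) T t = (\<Sum>n. (1 - a) * a ^ n * mDelta (conv_pow F (Suc n)) T t)"
    unfolding mDelta_def using G_measure[OF F a shift_int_sets[OF T]] .
  have sm: "\<And>s. summable (\<lambda>n. a ^ n * (1 - measure (conv_pow F (Suc n)) {..s}))"
    using a d by (intro summ_geo_bounded[where B=1]) (auto intro: prob_space.prob_le_1)
  have cm: "\<And>s n. 1 - measure (conv_pow F (Suc n)) {..s} = measure (conv_pow F (Suc n)) {s<..}"
  proof -
    fix s n
    have "{s<..} = space (conv_pow F (Suc n)) - {..s}" using d(5) by auto
    then show "1 - measure (conv_pow F (Suc n)) {..s} = measure (conv_pow F (Suc n)) {s<..}"
      using d(2)[of "Suc n"] prob_space.prob_compl[OF d(1), of "{..s}" "Suc n"] by simp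
  qed
  show ?thesis
  proof (cases "T = \<infinity>")
    case True
    have S: "shift_int t T = {t<..}" using True by (auto simp: shift_int_def)
    have "mean_diff F a T t = (1 - a) * (\<Sum>n. a ^ n * mDelta (conv_pow F (Suc n)) T t)"
      unfolding mean_diff_def mean_fun_def mDelta_def S using True by (simp add: cm)
    also have "\<dots> = (\<Sum>n. (1 - a) * (a ^ n * mDelta (conv_pow F (Suc n)) T t))"
      using a d by (intro suminf_mult[symmetric] summ_geo_bounded[where B=1]) (auto simp: mDelta_def intro: prob_space.prob_le_1)
    finally show ?thesis using Gs by (simp add: mult.assoc)
  next
    case False
    then obtain r where r: "T = ereal r" "0 < r" using T by (cases T) auto
    have eq: "\<And>n. a ^ n * (1 - measure (conv_pow F (Suc n)) {..t}) - a ^ n * (1 - measure (conv_pow F (Suc n)) {..t + r})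
        = a ^ n * mDelta (conv_pow F (Suc n)) T t"
    proof -
      fix n
      have "measure (conv_pow F (Suc n)) {..t + r} - measure (conv_pow F (Suc n)) {..t}
          = measure (conv_pow F (Suc n)) ({..t + r} - {..t})"
        using d(2)[of "Suc n"] r by (intro finite_measure.finite_measure_Diff[OF d(3), symmetric]) auto
      also have "{..t + r} - {..t} = shift_int t T" using r by (auto simp: shift_int_def)
      finally show "a ^ n * (1 - measure (conv_pow F (Suc n)) {..t}) - a ^ n * (1 - measure (conv_pow F (Suc n)) {..t + r})
        = a ^ n * mDelta (conv_pow F (Suc n)) T t" unfolding mDelta_def by (simp add: algebra_simps)
    qed
    have "mean_diff F a T t = (1 - a) * ((\<Sum>n. a ^ n * (1 - measure (conv_pow F (Suc n)) {..t}))
        - (\<Sum>n. a ^ n * (1 - measure (conv_pow F (Suc n)) {..t + r})))"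
      using False r unfolding mean_diff_def mean_fun_def by (simp add: algebra_simps)
    also have "\<dots> = (1 - a) * (\<Sum>n. a ^ n * mDelta (conv_pow F (Suc n)) T t)"
      using suminf_diff[OF sm sm] eq by simp
    also have "\<dots> = (\<Sum>n. (1 - a) * (a ^ n * mDelta (conv_pow F (Suc n)) T t))"
      using a d by (intro suminf_mult[symmetric] summ_geo_bounded[where B=1]) (auto simp: mDelta_def intro: prob_space.prob_le_1)
    finally show ?thesis using Gs by (simp add: mult.assoc)
  qed
qed

lemma renewal:
  assumes F: "distr_nonneg F" and T: "0 < T" and a: "0 < a" "a < 1"
  shows "mDelta (Gm F a) T t = (1 - a) * mDelta F T t + a * mDelta (F \<star> Gm F a) T t"
proof -
  define dd where "dd n s = mDelta (conv_pow F (Suc n)) T s" for n s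
  have dd0: "\<And>n s. 0 \<le> dd n s" unfolding dd_def mDelta_def by simp
  have dd1: "\<And>n s. dd n s \<le> 1" unfolding dd_def by (rule mDelta_le1[OF dn_conv_pow[OF F]])
  note dd01 = dd0 dd1
  have Gs: "\<And>s. mDelta (Gm F a) T s = (\<Sum>n. (1 - a) * a ^ n * dd n s)"
    unfolding mDelta_def dd_def using G_measure[OF F a shift_int_sets[OF T]] .
  have ddS: "\<And>n. (\<integral>x. dd n (t - x) \<partial>F) = dd (Suc n) t"
    unfolding dd_def conv_pow.simps(2)[of F "Suc _"]
    by (rule conv_dist(2)[OF F dn_conv_pow[OF F] T, symmetric])
  have int: "\<And>n. integrable F (\<lambda>x. (1 - a) * a ^ n * dd n (t - x))"
    unfolding dd_def by (rule integrable_mult_right, rule conv_dist(1)[OF F dn_conv_pow[OF F] T])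
  have nn: "\<And>n s. norm ((1 - a) * a ^ n * dd n s) = (1 - a) * a ^ n * dd n s"
    using a dd01 by simp
  have sm1: "\<And>s. summable (\<lambda>n. (1 - a) * a ^ n * dd n s)"
    using a dd01 by (intro summ_c_bounded[where B=1]) auto
  have sm2: "summable (\<lambda>n. (1 - a) * a ^ n * dd (Suc n) t)"
    using a dd01 by (intro summ_c_bounded[where B=1]) auto
  have ints: "\<And>n. (\<integral>x. (1 - a) * a ^ n * dd n (t - x) \<partial>F) = (1 - a) * a ^ n * dd (Suc n) t"
    using ddS by simp
  have "mDelta (F \<star> Gm F a) T t = (\<integral>x. mDelta (Gm F a) T (t - x) \<partial>F)"
    by (rule conv_dist(2)[OF F G_dn[OF F a] T])
  also have "\<dots> = (\<integral>x. (\<Sum>n. (1 - a) * a ^ n * dd n (t - x)) \<partial>F)"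
    using Gs by simp
  also have "\<dots> = (\<Sum>n. (\<integral>x. (1 - a) * a ^ n * dd n (t - x) \<partial>F))"
  proof (rule integral_suminf[OF int])
    show "AE x in F. summable (\<lambda>n. norm ((1 - a) * a ^ n * dd n (t - x)))"
      unfolding nn using sm1 by simp
    show "summable (\<lambda>n. \<integral>x. norm ((1 - a) * a ^ n * dd n (t - x)) \<partial>F)"
      unfolding nn ints by (rule sm2)
  qed
  also have "\<dots> = (\<Sum>n. (1 - a) * a ^ n * dd (Suc n) t)" unfolding ints ..
  finally have cv: "mDelta (F \<star> Gm F a) T t = (\<Sum>n. (1 - a) * a ^ n * dd (Suc n) t)" .
  have "(\<Sum>n. (1 - a) * a ^ Suc n * dd (Suc n) t) = (\<Sum>n. (1 - a) * a ^ n * dd n t) - (1 - a) * a ^ 0 * dd 0 t"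
    by (rule suminf_split_head[OF sm1])
  moreover have "(\<Sum>n. (1 - a) * a ^ Suc n * dd (Suc n) t) = a * (\<Sum>n. (1 - a) * a ^ n * dd (Suc n) t)"
  proof -
    have "(\<Sum>n. (1 - a) * a ^ Suc n * dd (Suc n) t) = (\<Sum>n. a * ((1 - a) * a ^ n * dd (Suc n) t))"
      by (simp add: algebra_simps)
    also have "\<dots> = a * (\<Sum>n. (1 - a) * a ^ n * dd (Suc n) t)" by (rule suminf_mult[OF sm2])
    finally show ?thesis .
  qed
  moreover have "dd 0 t = mDelta F T t" unfolding dd_def by (rule d1[OF F T])
  ultimately show ?thesis using Gs[of t] cv by simp
qed

context LT begin

lemma LBn: "c' < real k \<Longrightarrow> eventually (\<lambda>t. c' * mDelta F T t \<le> mDelta (conv_pow F k) T t) at_top"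
proof (induction k arbitrary: c')
  case 0
  have "eventually (\<lambda>t. (0::real) \<le> t) at_top" by (rule eventually_ge_at_top)
  then show ?case
  proof eventually_elim
    case (elim t)
    have "0 \<notin> shift_int t T" using elim shift_int_gt by force
    then have "mDelta (conv_pow F 0) T t = 0"
      by (simp add: mDelta_def conv_pow.simps measure_return Tpos indicator_def)
    moreover have "c' * mDelta F T t \<le> 0" using 0 f_nonneg by (simp add: mult_nonpos_nonneg)
    ultimately show ?case by simp
  qed
next
  case (Suc k)
  have "eventually (\<lambda>t. c' * mDelta F T t \<le> mDelta (F \<star> conv_pow F k) T t) at_top"
    by (rule LB[OF dn_conv_pow[OF dnF] _ Suc.IH]) (use Suc.prems in auto)
  then show ?case by (simp add: conv_pow.simps)
qed

end

lemma asympI: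
  fixes h k :: "real \<Rightarrow> real"
  assumes pos: "eventually (\<lambda>t. k t > 0) at_top"
    and b: "\<And>e. e > 0 \<Longrightarrow> eventually (\<lambda>t. \<bar>h t - k t\<bar> \<le> e * k t) at_top"
  shows "h \<sim>[at_top] k"
proof (rule asymp_equivI')
  show "((\<lambda>x. h x / k x) \<longlongrightarrow> 1) at_top"
  proof (rule tendstoI)
    fix e :: real assume e: "e > 0"
    from b[of "e/2"] e have "eventually (\<lambda>t. \<bar>h t - k t\<bar> \<le> e/2 * k t) at_top" by simp
    with pos show "eventually (\<lambda>t. dist (h t / k t) 1 < e) at_top"
    proof eventually_elim
      case (elim t)
      have "h t / k t - 1 = (h t - k t) / k t" using elim by (simp add: field_simps)
      then have "\<bar>h t / k t - 1\<bar> = \<bar>h t - k t\<bar> / k t" using elim by simp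
      also have "\<dots> \<le> e/2" using elim by (simp add: divide_le_eq)
      finally show ?case using e by (simp add: dist_real_def)
    qed
  qed
qed

lemma asympD:
  fixes h k :: "real \<Rightarrow> real"
  assumes "h \<sim>[at_top] k" "eventually (\<lambda>t. k t > 0) at_top" "e > 0"
  shows "eventually (\<lambda>t. \<bar>h t - k t\<bar> \<le> e * k t) at_top"
proof -
  have "eventually (\<lambda>t. dist (if h t = 0 \<and> k t = 0 then 1 else h t / k t) 1 < e) at_top"
    using tendstoD[OF asymp_equivD[OF assms(1)] assms(3)] .
  with assms(2) show ?thesis
  proof eventually_elim
    case (elim t)
    then have "\<bar>h t / k t - 1\<bar> < e" by (simp add: dist_real_def)
    moreover have "h t / k t - 1 = (h t - k t) / k t" using elim by (simp add: field_simps)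
    ultimately have "\<bar>h t - k t\<bar> / k t < e" using elim by simp
    then have "\<bar>h t - k t\<bar> < e * k t" using elim by (simp add: divide_less_eq)
    then show ?case by simp
  qed
qed

lemma rect:
  assumes "finite_measure P" "finite_measure Q" "X \<in> sets P" "Y \<in> sets Q"
  shows "measure (P \<Otimes>\<^sub>M Q) (X \<times> Y) = measure P X * measure Q Y"
proof -
  have s: "X \<times> Y \<in> sets (P \<Otimes>\<^sub>M Q)" using assms by (intro pair_measureI)
  have "measure (P \<Otimes>\<^sub>M Q) (X \<times> Y) = (\<integral>x. measure Q (Pair x -` (X \<times> Y)) \<partial>P)"
    by (rule pair_measure_fst(2)[OF assms(1,2) s])
  also have "\<dots> = (\<integral>x. indicator X x * measure Q Y \<partial>P)"
    by (rule Bochner_Integration.integral_cong) (auto simp: indicator_def)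
  also have "\<dots> = measure Q Y * measure P X" by (rule ind_const(2)[OF assms(1,3)])
  finally show ?thesis by simp
qed

lemma shift_mem_aux:
  assumes T: "0 < T" and "x + y \<in> shift_int t T" "x2 \<le> y" "t - x2 < x"
  shows "x \<in> shift_int (t - x2) T"
  using assms by (auto simp: shift_int_eq[OF T] split: if_splits)

lemma dn_compl:
  assumes "distr_nonneg Q"
  shows "measure Q {x..} = 1 - measure Q {..<x}"
proof -
  note q = dn_props[OF assms]
  have "{x..} = space Q - {..<x}" using q(5) by auto
  then show ?thesis using q(2) prob_space.prob_compl[OF q(1), of "{..<x}"] by simp
qed

context LT begin

lemma UEQ:
  assumes Q: "distr_nonneg Q" and d: "0 < \<delta>" "\<delta> < 1" and x2: "0 \<le> x2"
    and Ft: "1 - \<delta> \<le> measure F {..<x2}"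
    and ULt: "\<forall>z\<in>{0..x2}. (1 - \<delta>) * mDelta F T t \<le> mDelta F T (t - z) \<and> (1 - \<delta>) * mDelta F T (t - z) \<le> mDelta F T t"
    and B: "0 \<le> B" and gB: "\<And>u. x2 \<le> u \<Longrightarrow> u \<le> t \<Longrightarrow> mDelta Q T u \<le> B * mDelta F T u"
    and S2: "mDelta (F \<star> F) T t \<le> (2 + \<delta>) * mDelta F T t"
  shows "mDelta (F \<star> Q) T t \<le> mDelta F T t / (1 - \<delta>) + B * (1 + 3 * \<delta>) * mDelta F T t"
proof -
  note p = dn_props[OF dnF] and q = dn_props[OF Q]
  let ?S = "shift_int t T"
  let ?ft = "mDelta F T t"
  have ft0: "0 \<le> ?ft" by (rule f_nonneg)
  have d1: "0 < 1 - \<delta>" using d by simp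
  define A where "A = {p. fst p + snd p \<in> ?S \<and> fst p \<in> UNIV \<and> snd p \<in> (UNIV::real set)}"
  define R1 where "R1 = {p. fst p + snd p \<in> ?S \<and> fst p \<in> UNIV \<and> snd p \<in> {..<x2}}"
  define R2 where "R2 = {p. fst p + snd p \<in> ?S \<and> fst p \<in> {..t - x2} \<and> snd p \<in> {x2..}}"
  define R3 where "R3 = shift_int (t - x2) T \<times> {x2..}"
  define A2 where "A2 = {p. fst p + snd p \<in> ?S \<and> fst p \<in> {..t - x2} \<and> snd p \<in> (UNIV::real set)}"
  define A3 where "A3 = {p. fst p + snd p \<in> ?S \<and> fst p \<in> {t - x2<..} \<and> snd p \<in> (UNIV::real set)}"
  define A1 where "A1 = {p. fst p + snd p \<in> ?S \<and> fst p \<in> UNIV \<and> snd p \<in> {..<x2}}"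
  have sA: "A \<in> sets (F \<Otimes>\<^sub>M Q)" unfolding A_def by (rule pair_set[OF p(2) q(2)]) (use Tpos in auto)
  have sR1: "R1 \<in> sets (F \<Otimes>\<^sub>M Q)" unfolding R1_def by (rule pair_set[OF p(2) q(2)]) (use Tpos in auto)
  have sR2: "R2 \<in> sets (F \<Otimes>\<^sub>M Q)" unfolding R2_def by (rule pair_set[OF p(2) q(2)]) (use Tpos in auto)
  have sR3: "R3 \<in> sets (F \<Otimes>\<^sub>M Q)" unfolding R3_def using p(2) q(2) Tpos by (intro pair_measureI) auto
  have sAF: "A \<in> sets (F \<Otimes>\<^sub>M F)" unfolding A_def by (rule pair_set[OF p(2) p(2)]) (use Tpos in auto)
  have sA1: "A1 \<in> sets (F \<Otimes>\<^sub>M F)" unfolding A1_def by (rule pair_set[OF p(2) p(2)]) (use Tpos in auto)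
  have sA2: "A2 \<in> sets (F \<Otimes>\<^sub>M F)" unfolding A2_def by (rule pair_set[OF p(2) p(2)]) (use Tpos in auto)
  have sA3: "A3 \<in> sets (F \<Otimes>\<^sub>M F)" unfolding A3_def by (rule pair_set[OF p(2) p(2)]) (use Tpos in auto)
  interpret PQ: finite_measure "F \<Otimes>\<^sub>M Q" using q(3) p(3) by (rule finite_measure_pair_measure)
  interpret PF: finite_measure "F \<Otimes>\<^sub>M F" using p(3) p(3) by (rule finite_measure_pair_measure)
  have convQ: "mDelta (F \<star> Q) T t = measure (F \<Otimes>\<^sub>M Q) A"
    unfolding mDelta_def A_def using conv_pair(2)[OF p(2) q(2) shift_int_sets[OF Tpos]] by simp
  have convF: "mDelta (F \<star> F) T t = measure (F \<Otimes>\<^sub>M F) A"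
    unfolding mDelta_def A_def using conv_pair(2)[OF p(2) p(2) shift_int_sets[OF Tpos]] by simp
  have sub: "A \<subseteq> R1 \<union> R2 \<union> R3"
  proof
    fix z assume z: "z \<in> A"
    show "z \<in> R1 \<union> R2 \<union> R3"
    proof (cases "snd z < x2")
      case True then show ?thesis using z by (auto simp: A_def R1_def)
    next
      case False
      show ?thesis
      proof (cases "fst z \<le> t - x2")
        case True then show ?thesis using z False by (auto simp: A_def R2_def)
      next
        case False2: False
        have "fst z \<in> shift_int (t - x2) T"
          using shift_mem_aux[OF Tpos, of "fst z" "snd z" t x2] z False False2 by (auto simp: A_def)
        then show ?thesis using False by (auto simp: R3_def mem_Times_iff)
      qed
    qed
  qed
  have "measure (F \<Otimes>\<^sub>M Q) A \<le> measure (F \<Otimes>\<^sub>M Q) (R1 \<union> R2 \<union> R3)"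
    using sub sR1 sR2 sR3 by (intro PQ.finite_measure_mono) auto
  also have "\<dots> \<le> measure (F \<Otimes>\<^sub>M Q) (R1 \<union> R2) + measure (F \<Otimes>\<^sub>M Q) R3"
    using sR1 sR2 sR3 by (intro measure_Un_le) auto
  also have "\<dots> \<le> measure (F \<Otimes>\<^sub>M Q) R1 + measure (F \<Otimes>\<^sub>M Q) R2 + measure (F \<Otimes>\<^sub>M Q) R3"
    using sR1 sR2 measure_Un_le[of R1 "F \<Otimes>\<^sub>M Q" R2] by simp
  finally have tot: "mDelta (F \<star> Q) T t \<le> measure (F \<Otimes>\<^sub>M Q) R1 + measure (F \<Otimes>\<^sub>M Q) R2 + measure (F \<Otimes>\<^sub>M Q) R3"
    using convQ by simp
  have sM: "{..<x2} \<in> sets Q" using q(2) by simp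
  have fR1: "measure (F \<Otimes>\<^sub>M Q) R1 = (\<integral>y. measure F ((\<lambda>x. (x, y)) -` R1) \<partial>Q)"
    and iR1: "integrable Q (\<lambda>y. measure F ((\<lambda>x. (x, y)) -` R1))"
    using pair_measure_snd[OF p(3) q(3) sR1] by auto
  have "(\<integral>y. measure F ((\<lambda>x. (x, y)) -` R1) \<partial>Q) \<le> (\<integral>y. indicator {..<x2} y * (?ft / (1 - \<delta>)) \<partial>Q)"
  proof (rule integral_mono_AE[OF iR1 ind_const(1)[OF q(3) sM]])
    show "AE y in Q. measure F ((\<lambda>x. (x, y)) -` R1) \<le> indicator {..<x2} y * (?ft / (1 - \<delta>))"
      using q(4)
    proof eventually_elim
      case (elim y)
      show ?case
      proof (cases "y < x2")
        case True
        have "(\<lambda>x. (x, y)) -` R1 = shift_int (t - y) T" unfolding R1_def pre_snd using True by simp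
        moreover have "(1 - \<delta>) * mDelta F T (t - y) \<le> ?ft" using ULt elim True by auto
        then have "mDelta F T (t - y) \<le> ?ft / (1 - \<delta>)" using d1 by (simp add: pos_le_divide_eq mult.commute)
        ultimately show ?thesis using True by (simp add: mDelta_def)
      next
        case False then show ?thesis unfolding R1_def pre_snd by simp
      qed
    qed
  qed
  then have lR1: "measure (F \<Otimes>\<^sub>M Q) R1 \<le> (?ft / (1 - \<delta>)) * measure Q {..<x2}"
    unfolding fR1 ind_const(2)[OF q(3) sM] .
  have eR3: "measure (F \<Otimes>\<^sub>M Q) R3 = mDelta F T (t - x2) * measure Q {x2..}"
    unfolding R3_def mDelta_def using p(2) q(2) Tpos by (intro rect[OF p(3) q(3)]) auto
  have bR3: "mDelta F T (t - x2) \<le> ?ft / (1 - \<delta>)"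
  proof -
    have "(1 - \<delta>) * mDelta F T (t - x2) \<le> ?ft" using ULt x2 by auto
    then show ?thesis using d1 by (simp add: pos_le_divide_eq mult.commute)
  qed
  have lR3: "measure (F \<Otimes>\<^sub>M Q) R3 \<le> (?ft / (1 - \<delta>)) * measure Q {x2..}"
    unfolding eR3 by (rule mult_right_mono[OF bR3]) simp
  have l13: "measure (F \<Otimes>\<^sub>M Q) R1 + measure (F \<Otimes>\<^sub>M Q) R3 \<le> ?ft / (1 - \<delta>)"
  proof -
    have "(?ft / (1 - \<delta>)) * measure Q {..<x2} + (?ft / (1 - \<delta>)) * measure Q {x2..}
        = (?ft / (1 - \<delta>)) * (measure Q {..<x2} + measure Q {x2..})" by (rule distrib_left[symmetric])
    also have "\<dots> = ?ft / (1 - \<delta>)" using dn_compl[OF Q, of x2] by simp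
    finally have "(?ft / (1 - \<delta>)) * measure Q {..<x2} + (?ft / (1 - \<delta>)) * measure Q {x2..} = ?ft / (1 - \<delta>)" .
    then show ?thesis using lR1 lR3 by linarith
  qed
  have "measure (F \<Otimes>\<^sub>M F) A = measure (F \<Otimes>\<^sub>M F) (A2 \<union> A3)"
    by (rule arg_cong[where f="measure _"]) (auto simp: A_def A2_def A3_def)
  also have "\<dots> = measure (F \<Otimes>\<^sub>M F) A2 + measure (F \<Otimes>\<^sub>M F) A3"
    using sA2 sA3 by (intro PF.finite_measure_Union) (auto simp: A2_def A3_def)
  finally have mAF: "measure (F \<Otimes>\<^sub>M F) A = measure (F \<Otimes>\<^sub>M F) A2 + measure (F \<Otimes>\<^sub>M F) A3" .
  have "measure (F \<Otimes>\<^sub>M F) A1 \<le> measure (F \<Otimes>\<^sub>M F) A3"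
    using sA1 sA3 by (intro PF.finite_measure_mono) (auto simp: A1_def A3_def shift_int_eq[OF Tpos] split: if_splits)
  moreover have "(1 - \<delta>) * (1 - \<delta>) * ?ft \<le> measure (F \<Otimes>\<^sub>M F) A1"
  proof -
    have sMF: "{..<x2} \<in> sets F" using p(2) by simp
    have fA1: "measure (F \<Otimes>\<^sub>M F) A1 = (\<integral>y. measure F ((\<lambda>x. (x, y)) -` A1) \<partial>F)"
      and iA1: "integrable F (\<lambda>y. measure F ((\<lambda>x. (x, y)) -` A1))"
      using pair_measure_snd[OF p(3) p(3) sA1] by auto
    have "(\<integral>y. indicator {..<x2} y * ((1 - \<delta>) * ?ft) \<partial>F) \<le> (\<integral>y. measure F ((\<lambda>x. (x, y)) -` A1) \<partial>F)"
    proof (rule integral_mono_AE[OF ind_const(1)[OF p(3) sMF] iA1])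
      show "AE y in F. indicator {..<x2} y * ((1 - \<delta>) * ?ft) \<le> measure F ((\<lambda>x. (x, y)) -` A1)"
        using p(4)
      proof eventually_elim
        case (elim y)
        show ?case
        proof (cases "y < x2")
          case True
          have "(\<lambda>x. (x, y)) -` A1 = shift_int (t - y) T" unfolding A1_def pre_snd using True by simp
          moreover have "(1 - \<delta>) * ?ft \<le> mDelta F T (t - y)" using ULt elim True by auto
          ultimately show ?thesis using True by (simp add: mDelta_def)
        next
          case False then show ?thesis by simp
        qed
      qed
    qed
    then have l: "((1 - \<delta>) * ?ft) * measure F {..<x2} \<le> measure (F \<Otimes>\<^sub>M F) A1"
      unfolding fA1 ind_const(2)[OF p(3) sMF] .
    have "((1 - \<delta>) * ?ft) * (1 - \<delta>) \<le> ((1 - \<delta>) * ?ft) * measure F {..<x2}"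
      using Ft d1 ft0 by (intro mult_left_mono) auto
    then show ?thesis using l by (simp add: algebra_simps)
  qed
  ultimately have lA3: "(1 - \<delta>) * (1 - \<delta>) * ?ft \<le> measure (F \<Otimes>\<^sub>M F) A3" by linarith
  have uA2: "measure (F \<Otimes>\<^sub>M F) A2 \<le> (1 + 3 * \<delta>) * ?ft"
  proof -
    have "measure (F \<Otimes>\<^sub>M F) A2 \<le> (2 + \<delta>) * ?ft - (1 - \<delta>) * (1 - \<delta>) * ?ft"
      using mAF convF S2 lA3 by linarith
    also have "\<dots> = (1 + 3 * \<delta>) * ?ft - \<delta> * \<delta> * ?ft" by (simp add: algebra_simps)
    also have "\<dots> \<le> (1 + 3 * \<delta>) * ?ft" using ft0 by simp
    finally show ?thesis .
  qed
  have fR2: "measure (F \<Otimes>\<^sub>M Q) R2 = (\<integral>x. measure Q (Pair x -` R2) \<partial>F)"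
    and iR2: "integrable F (\<lambda>x. measure Q (Pair x -` R2))"
    using pair_measure_fst[OF p(3) q(3) sR2] by auto
  have fA2: "measure (F \<Otimes>\<^sub>M F) A2 = (\<integral>x. measure F (Pair x -` A2) \<partial>F)"
    and iA2: "integrable F (\<lambda>x. measure F (Pair x -` A2))"
    using pair_measure_fst[OF p(3) p(3) sA2] by auto
  have "(\<integral>x. measure Q (Pair x -` R2) \<partial>F) \<le> (\<integral>x. B * measure F (Pair x -` A2) \<partial>F)"
  proof (rule integral_mono_AE[OF iR2 integrable_mult_right[OF iA2]])
    show "AE x in F. measure Q (Pair x -` R2) \<le> B * measure F (Pair x -` A2)"
      using p(4)
    proof eventually_elim
      case (elim x)
      show ?case
      proof (cases "x \<le> t - x2")
        case True
        have e1: "Pair x -` R2 = shift_int (t - x) T \<inter> {x2..}" unfolding R2_def pre_fst using True by simp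
        have e2: "Pair x -` A2 = shift_int (t - x) T" unfolding A2_def pre_fst using True by simp
        have "measure Q (Pair x -` R2) \<le> mDelta Q T (t - x)"
          unfolding e1 mDelta_def using q(2) Tpos by (intro finite_measure.finite_measure_mono[OF q(3)]) auto
        also have "\<dots> \<le> B * mDelta F T (t - x)" using gB[of "t - x"] True elim by auto
        finally show ?thesis unfolding e2 mDelta_def .
      next
        case False then show ?thesis unfolding R2_def A2_def pre_fst by simp
      qed
    qed
  qed
  then have lR2: "measure (F \<Otimes>\<^sub>M Q) R2 \<le> B * measure (F \<Otimes>\<^sub>M F) A2"
    unfolding fR2 fA2 by simp
  have "B * measure (F \<Otimes>\<^sub>M F) A2 \<le> B * ((1 + 3 * \<delta>) * ?ft)"
    using uA2 B by (intro mult_left_mono)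
  then show ?thesis using tot l13 lR2 by (simp add: algebra_simps)
qed

end

lemma w_sums:
  fixes a :: real assumes "0 < a" "a < 1"
  shows "(\<lambda>n. (1 - a) * a ^ n * (real n + 1)) sums (1 / (1 - a))"
proof -
  have "(\<lambda>n. (1 - a) * (of_nat (Suc n) * a ^ n)) sums ((1 - a) * (1 / (1 - a)^2))"
    using assms by (intro sums_mult geometric_deriv_sums) auto
  moreover have "(1 - a) * (1 / (1 - a)^2) = 1 / (1 - a)" using assms by (simp add: power2_eq_square)
  ultimately show ?thesis by (simp add: algebra_simps)
qed

lemma c_partial_le1:
  fixes a :: real assumes "0 < a" "a < 1"
  shows "(\<Sum>n<N. (1 - a) * a ^ n) \<le> 1"
proof -
  have "(\<Sum>n<N. (1 - a) * a ^ n) = (1 - a) * (\<Sum>n<N. a ^ n)" by (simp add: sum_distrib_left)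
  also have "\<dots> = 1 - a ^ N" using assms by (simp add: sum_gp_strict)
  also have "\<dots> \<le> 1" using assms by simp
  finally show ?thesis .
qed

context LT begin

lemma g_sum_lower:
  assumes a: "0 < a" "a < 1" and eta: "0 \<le> \<eta>" and dl: "0 \<le> \<delta>" and N: "2 \<le> N"
    and hyp: "\<And>n. n < N \<Longrightarrow> (real n + 1 - \<eta>) * mDelta F T t \<le> mDelta (conv_pow F (Suc n)) T t"
    and hyp1: "(2 + \<delta> - \<eta>) * mDelta F T t \<le> mDelta (conv_pow F 2) T t"
  shows "((\<Sum>n<N. (1 - a) * a ^ n * (real n + 1)) - \<eta> + (1 - a) * a * \<delta>) * mDelta F T t \<le> mDelta (Gm F a) T t"
proof -
  let ?ft = "mDelta F T t"
  define dd where "dd n = mDelta (conv_pow F (Suc n)) T t" for n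
  have dd0: "\<And>n. 0 \<le> dd n" unfolding dd_def mDelta_def by simp
  have dd1: "\<And>n. dd n \<le> 1" unfolding dd_def by (rule mDelta_le1[OF dn_conv_pow[OF dnF]])
  have ft0: "0 \<le> ?ft" by (rule f_nonneg)
  have Gs: "mDelta (Gm F a) T t = (\<Sum>n. (1 - a) * a ^ n * dd n)"
    unfolding mDelta_def dd_def using G_measure[OF dnF a shift_int_sets[OF Tpos]] .
  have sm: "summable (\<lambda>n. (1 - a) * a ^ n * dd n)"
    using a dd0 dd1 by (intro summ_c_bounded[where B=1]) auto
  have "(\<Sum>n<N. (1 - a) * a ^ n * dd n) \<le> (\<Sum>n. (1 - a) * a ^ n * dd n)"
    using a dd0 by (intro sum_le_suminf[OF sm]) auto
  moreover have "(\<Sum>n<N. (1 - a) * a ^ n * (real n + 1 - \<eta>) * ?ft + (if n = 1 then (1 - a) * a ^ n * \<delta> * ?ft else 0))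
      \<le> (\<Sum>n<N. (1 - a) * a ^ n * dd n)"
  proof (rule sum_mono)
    fix n assume n: "n \<in> {..<N}"
    have c0: "0 \<le> (1 - a) * a ^ n" using a by simp
    show "(1 - a) * a ^ n * (real n + 1 - \<eta>) * ?ft + (if n = 1 then (1 - a) * a ^ n * \<delta> * ?ft else 0)
        \<le> (1 - a) * a ^ n * dd n"
    proof (cases "n = 1")
      case True
      have "(2 + \<delta> - \<eta>) * ?ft \<le> dd n" using hyp1 True by (simp add: dd_def numeral_2_eq_2)
      then have "(1 - a) * a ^ n * ((2 + \<delta> - \<eta>) * ?ft) \<le> (1 - a) * a ^ n * dd n"
        using c0 by (intro mult_left_mono)
      then show ?thesis using True by (simp add: algebra_simps)
    next
      case False
      have "(real n + 1 - \<eta>) * ?ft \<le> dd n" using hyp n by (simp add: dd_def)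
      then have "(1 - a) * a ^ n * ((real n + 1 - \<eta>) * ?ft) \<le> (1 - a) * a ^ n * dd n"
        using c0 by (intro mult_left_mono)
      then show ?thesis using False by (simp add: algebra_simps)
    qed
  qed
  moreover have "(\<Sum>n<N. (1 - a) * a ^ n * (real n + 1 - \<eta>) * ?ft + (if n = 1 then (1 - a) * a ^ n * \<delta> * ?ft else 0))
      = (\<Sum>n<N. (1 - a) * a ^ n * (real n + 1)) * ?ft - \<eta> * ?ft * (\<Sum>n<N. (1 - a) * a ^ n) + (1 - a) * a * \<delta> * ?ft"
  proof -
    have "(\<Sum>n<N. (1 - a) * a ^ n * (real n + 1 - \<eta>) * ?ft + (if n = 1 then (1 - a) * a ^ n * \<delta> * ?ft else 0))
      = (\<Sum>n<N. (1 - a) * a ^ n * (real n + 1 - \<eta>) * ?ft) + (\<Sum>n<N. (if n = 1 then (1 - a) * a ^ n * \<delta> * ?ft else 0))"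
      by (rule sum.distrib)
    also have "(\<Sum>n<N. (if n = 1 then (1 - a) * a ^ n * \<delta> * ?ft else 0)) = (1 - a) * a * \<delta> * ?ft"
      using N by (subst sum.delta) auto
    also have "(\<Sum>n<N. (1 - a) * a ^ n * (real n + 1 - \<eta>) * ?ft)
        = (\<Sum>n<N. (1 - a) * a ^ n * (real n + 1) * ?ft - \<eta> * ?ft * ((1 - a) * a ^ n))"
      by (rule sum.cong) (auto simp: algebra_simps)
    also have "\<dots> = (\<Sum>n<N. (1 - a) * a ^ n * (real n + 1)) * ?ft - \<eta> * ?ft * (\<Sum>n<N. (1 - a) * a ^ n)"
      by (simp add: sum_subtractf sum_distrib_left sum_distrib_right)
    finally show ?thesis .
  qed
  moreover have "\<eta> * ?ft * (\<Sum>n<N. (1 - a) * a ^ n) \<le> \<eta> * ?ft"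
    using c_partial_le1[OF a, of N] eta ft0 by (simp add: mult_left_le)
  ultimately show ?thesis using Gs by (simp add: algebra_simps)
qed

lemma LBn': "\<eta> > 0 \<Longrightarrow> eventually (\<lambda>t. \<forall>n\<in>{..<N}. (real n + 1 - \<eta>) * mDelta F T t \<le> mDelta (conv_pow F (Suc n)) T t) at_top"
  by (intro eventually_ball_finite ballI LBn) auto

lemma partial_big:
  assumes a: "0 < a" "a < 1" and eta: "\<eta> > 0"
  shows "\<exists>N\<ge>2. 1 / (1 - a) - \<eta> < (\<Sum>n<N. (1 - a) * a ^ n * (real n + 1))"
proof -
  have "eventually (\<lambda>N. 1 / (1 - a) - \<eta> < (\<Sum>n<N. (1 - a) * a ^ n * (real n + 1))) sequentially"
    using w_sums[OF a] eta unfolding sums_def by (intro order_tendstoD(1)) auto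
  then obtain N0 where "\<And>N. N \<ge> N0 \<Longrightarrow> 1 / (1 - a) - \<eta> < (\<Sum>n<N. (1 - a) * a ^ n * (real n + 1))"
    unfolding eventually_sequentially by blast
  then show ?thesis by (intro exI[of _ "max N0 2"]) auto
qed

lemma g_lower:
  assumes a: "0 < a" "a < 1" and c: "c < 1 / (1 - a)"
  shows "eventually (\<lambda>t. c * mDelta F T t \<le> mDelta (Gm F a) T t) at_top"
proof -
  define \<eta> where "\<eta> = (1 / (1 - a) - c) / 2"
  have eta: "\<eta> > 0" using c by (simp add: \<eta>_def)
  obtain N where N: "N \<ge> 2" "1 / (1 - a) - \<eta> < (\<Sum>n<N. (1 - a) * a ^ n * (real n + 1))"
    using partial_big[OF a eta] by blast
  show ?thesis using LBn'[OF eta, of N]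
  proof eventually_elim
    case (elim t)
    have "1 \<in> {..<N}" using N(1) by simp
    from bspec[OF elim this] have "(real 1 + 1 - \<eta>) * mDelta F T t \<le> mDelta (conv_pow F (Suc 1)) T t" .
    moreover have "conv_pow F (Suc 1) = conv_pow F 2" by (simp add: numeral_2_eq_2)
    ultimately have h1: "(2 + 0 - \<eta>) * mDelta F T t \<le> mDelta (conv_pow F 2) T t" by simp
    have "((\<Sum>n<N. (1 - a) * a ^ n * (real n + 1)) - \<eta> + (1 - a) * a * 0) * mDelta F T t \<le> mDelta (Gm F a) T t"
      by (rule g_sum_lower[OF a _ _ N(1) _ h1]) (use eta elim in auto)
    moreover have "c \<le> (\<Sum>n<N. (1 - a) * a ^ n * (real n + 1)) - \<eta> + (1 - a) * a * 0"
    proof -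
      have *: "\<And>X::real. X - 2 * ((X - c) / 2) = c" by (simp add: field_simps)
      have "1 / (1 - a) - 2 * \<eta> = c" unfolding \<eta>_def by (rule *)
      then show ?thesis using N(2) by linarith
    qed
    ultimately show ?case using f_nonneg[of F] by (meson mult_right_mono order_trans f_nonneg)
  qed
qed

end

context LT begin

lemma fpos: "eventually (\<lambda>t. mDelta F T t > 0) at_top"
  using LF unfolding class_L_def by blast

lemma unbounded: "measure F {x<..} > 0"
proof -
  obtain y0 where y0: "\<And>y. y \<ge> y0 \<Longrightarrow> mDelta F T y > 0"
    using fpos unfolding eventually_at_top_linorder by blast
  let ?y = "max x y0"
  have "mDelta F T ?y \<le> measure F {x<..}"
    unfolding mDelta_def using dn_props(2)[OF dnF] Tpos
    by (intro finite_measure.finite_measure_mono[OF dn_props(3)[OF dnF]])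
       (auto dest: shift_int_gt)
  then show ?thesis using y0[of ?y] by simp
qed

lemma exists_not:
  assumes "eventually P at_top" "\<not> eventually Q at_top"
  shows "\<exists>t. P t \<and> \<not> Q t"
proof (rule ccontr)
  assume "\<not> (\<exists>t. P t \<and> \<not> Q t)"
  then have "\<And>t. P t \<Longrightarrow> Q t" by blast
  then have "eventually Q at_top" using assms(1) by (rule eventually_mono[rotated])
  then show False using assms(2) by simp
qed

lemma converse_upper:
  assumes a: "0 < a" "a < 1"
    and asy: "(\<lambda>t. mDelta (Gm F a) T t) \<sim>[at_top] (\<lambda>t. mDelta F T t / (1 - a))"
    and e: "\<epsilon> > 0"
  shows "eventually (\<lambda>t. mDelta (F \<star> F) T t \<le> (2 + \<epsilon>) * mDelta F T t) at_top"
proof (rule ccontr)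
  assume nev: "\<not> ?thesis"
  define \<kappa> where "\<kappa> = (1 - a) * a * \<epsilon>"
  have ka: "\<kappa> > 0" using a e by (simp add: \<kappa>_def)
  define \<eta> where "\<eta> = \<kappa> / 4"
  have eta: "\<eta> > 0" using ka by (simp add: \<eta>_def)
  obtain N where N: "N \<ge> 2" "1 / (1 - a) - \<eta> < (\<Sum>n<N. (1 - a) * a ^ n * (real n + 1))"
    using partial_big[OF a eta] by blast
  have pos: "eventually (\<lambda>t. mDelta F T t / (1 - a) > 0) at_top"
    using fpos by eventually_elim (use a in simp)
  have E2: "eventually (\<lambda>t. \<bar>mDelta (Gm F a) T t - mDelta F T t / (1 - a)\<bar> \<le> ((1 - a) * \<kappa> / 4) * (mDelta F T t / (1 - a))) at_top"
    using a ka by (intro asympD[OF asy pos]) simp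
  have "eventually (\<lambda>t. (\<forall>n\<in>{..<N}. (real n + 1 - \<eta>) * mDelta F T t \<le> mDelta (conv_pow F (Suc n)) T t)
      \<and> \<bar>mDelta (Gm F a) T t - mDelta F T t / (1 - a)\<bar> \<le> ((1 - a) * \<kappa> / 4) * (mDelta F T t / (1 - a))
      \<and> mDelta F T t > 0) at_top"
    using LBn'[OF eta, of N] E2 fpos by (intro eventually_conj)
  from exists_not[OF this nev] obtain t where
    h1: "\<forall>n\<in>{..<N}. (real n + 1 - \<eta>) * mDelta F T t \<le> mDelta (conv_pow F (Suc n)) T t"
    and h2: "\<bar>mDelta (Gm F a) T t - mDelta F T t / (1 - a)\<bar> \<le> ((1 - a) * \<kappa> / 4) * (mDelta F T t / (1 - a))"
    and h3: "mDelta F T t > 0"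
    and h4: "\<not> mDelta (F \<star> F) T t \<le> (2 + \<epsilon>) * mDelta F T t" by blast
  let ?ft = "mDelta F T t"
  have "(2 + \<epsilon> - \<eta>) * ?ft \<le> (2 + \<epsilon>) * ?ft" using eta h3 by (simp add: mult_right_mono)
  then have hyp1: "(2 + \<epsilon> - \<eta>) * ?ft \<le> mDelta (conv_pow F 2) T t"
    using h4 d2[OF dnF Tpos, of t] by simp
  have low: "((\<Sum>n<N. (1 - a) * a ^ n * (real n + 1)) - \<eta> + (1 - a) * a * \<epsilon>) * ?ft \<le> mDelta (Gm F a) T t"
    by (rule g_sum_lower[OF a _ _ N(1) _ hyp1]) (use eta e h1 in auto)
  have eq1: "((1 - a) * \<kappa> / 4) * (?ft / (1 - a)) = \<kappa> / 4 * ?ft" using a by (simp add: field_simps)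
  have "mDelta (Gm F a) T t - ?ft / (1 - a) \<le> ((1 - a) * \<kappa> / 4) * (?ft / (1 - a))"
    using h2 by (rule abs_le_D1)
  then have up: "mDelta (Gm F a) T t \<le> ?ft / (1 - a) + \<kappa> / 4 * ?ft" unfolding eq1 by linarith
  have "(1 / (1 - a) + \<kappa> / 2) * ?ft < ((\<Sum>n<N. (1 - a) * a ^ n * (real n + 1)) - \<eta> + (1 - a) * a * \<epsilon>) * ?ft"
  proof (rule mult_strict_right_mono[OF _ h3])
    show "1 / (1 - a) + \<kappa> / 2 < (\<Sum>n<N. (1 - a) * a ^ n * (real n + 1)) - \<eta> + (1 - a) * a * \<epsilon>"
      using N(2) unfolding \<eta>_def \<kappa>_def by linarith
  qed
  moreover have "?ft / (1 - a) + \<kappa> / 4 * ?ft \<le> (1 / (1 - a) + \<kappa> / 2) * ?ft"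
    using ka h3 by (simp add: algebra_simps)
  ultimately show False using low up by linarith
qed

lemma converse:
  assumes a: "0 < a" "a < 1"
    and asy: "(\<lambda>t. mDelta (Gm F a) T t) \<sim>[at_top] (\<lambda>t. mDelta F T t / (1 - a))"
  shows "class_S T F"
  unfolding class_S_def
proof (intro conjI allI LF)
  show "\<And>x. measure F {x<..} > 0" by (rule unbounded)
  show "(\<lambda>x. mDelta (F \<star> F) T x) \<sim>[at_top] (\<lambda>x. 2 * mDelta F T x)"
  proof (rule asympI)
    show "eventually (\<lambda>t. 2 * mDelta F T t > 0) at_top" using fpos by eventually_elim simp
    fix e :: real assume e: "e > 0"
    have lo: "eventually (\<lambda>t. (2 - 2 * e) * mDelta F T t \<le> mDelta (conv_pow F 2) T t) at_top"
      using e by (intro LBn) simp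
    have hi: "eventually (\<lambda>t. mDelta (F \<star> F) T t \<le> (2 + 2 * e) * mDelta F T t) at_top"
      using e by (intro converse_upper[OF a asy]) simp
    show "eventually (\<lambda>t. \<bar>mDelta (F \<star> F) T t - 2 * mDelta F T t\<bar> \<le> e * (2 * mDelta F T t)) at_top"
      using lo hi
    proof eventually_elim
      case (elim t)
      then have "(2 - 2 * e) * mDelta F T t \<le> mDelta (F \<star> F) T t" using d2[OF dnF Tpos, of t] by simp
      then show ?case using elim by (simp add: abs_le_iff algebra_simps)
    qed
  qed
qed

end

context LT begin

lemma gstep:
  assumes a: "0 < a" "a < 1" and d: "0 < \<delta>" "\<delta> < 1" and x2: "0 \<le> x2"
    and Ft: "1 - \<delta> \<le> measure F {..<x2}"
    and ULt: "\<forall>z\<in>{0..x2}. (1 - \<delta>) * mDelta F T t \<le> mDelta F T (t - z) \<and> (1 - \<delta>) * mDelta F T (t - z) \<le> mDelta F T t"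
    and B: "0 \<le> B" and gB: "\<And>u. x2 \<le> u \<Longrightarrow> u \<le> t \<Longrightarrow> mDelta (Gm F a) T u \<le> B * mDelta F T u"
    and S2: "mDelta (F \<star> F) T t \<le> (2 + \<delta>) * mDelta F T t"
  shows "mDelta (Gm F a) T t \<le> ((1 - a) + a / (1 - \<delta>) + a * B * (1 + 3 * \<delta>)) * mDelta F T t"
proof -
  have H: "mDelta (F \<star> Gm F a) T t \<le> mDelta F T t / (1 - \<delta>) + B * (1 + 3 * \<delta>) * mDelta F T t"
    by (rule UEQ[OF G_dn[OF dnF a] d x2 Ft ULt B gB S2])
  have "a * mDelta (F \<star> Gm F a) T t \<le> a * (mDelta F T t / (1 - \<delta>) + B * (1 + 3 * \<delta>) * mDelta F T t)"
    using a by (intro mult_left_mono[OF H]) auto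
  moreover have "a * (mDelta F T t / (1 - \<delta>) + B * (1 + 3 * \<delta>) * mDelta F T t)
      = (a / (1 - \<delta>)) * mDelta F T t + (a * B * (1 + 3 * \<delta>)) * mDelta F T t"
    by (simp add: distrib_left)
  moreover have "((1 - a) + a / (1 - \<delta>) + a * B * (1 + 3 * \<delta>)) * mDelta F T t
      = (1 - a) * mDelta F T t + (a / (1 - \<delta>)) * mDelta F T t + (a * B * (1 + 3 * \<delta>)) * mDelta F T t"
    by (simp add: distrib_right)
  ultimately show ?thesis using renewal[OF dnF Tpos a, of t] by linarith
qed

lemma Shyp:
  assumes S: "class_S T F" and d: "\<delta> > 0"
  shows "eventually (\<lambda>t. mDelta (F \<star> F) T t \<le> (2 + \<delta>) * mDelta F T t) at_top"
proof -
  have asy: "(\<lambda>x. mDelta (F \<star> F) T x) \<sim>[at_top] (\<lambda>x. 2 * mDelta F T x)"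
    using S unfolding class_S_def by blast
  have pos: "eventually (\<lambda>t. 2 * mDelta F T t > 0) at_top" using fpos by eventually_elim simp
  have "eventually (\<lambda>t. \<bar>mDelta (F \<star> F) T t - 2 * mDelta F T t\<bar> \<le> (\<delta> / 2) * (2 * mDelta F T t)) at_top"
    using d by (intro asympD[OF asy pos]) simp
  then show ?thesis
  proof eventually_elim
    case (elim t)
    then have "mDelta (F \<star> F) T t - 2 * mDelta F T t \<le> (\<delta> / 2) * (2 * mDelta F T t)" by (rule abs_le_D1)
    then show ?case by (simp add: algebra_simps)
  qed
qed

lemma Pmono:
  assumes "eventually (\<lambda>t. mDelta (Gm F a) T t \<le> B * mDelta F T t) at_top" "B \<le> B'"
  shows "eventually (\<lambda>t. mDelta (Gm F a) T t \<le> B' * mDelta F T t) at_top"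
  using assms(1)
proof eventually_elim
  case (elim t)
  have "B * mDelta F T t \<le> B' * mDelta F T t" using assms(2) f_nonneg by (intro mult_right_mono)
  then show ?case using elim by linarith
qed

end

context LT begin
lemma step:
  assumes S: "class_S T F" and a: "0 < a" "a < 1" and B: "0 \<le> B"
    and P: "eventually (\<lambda>t. mDelta (Gm F a) T t \<le> B * mDelta F T t) at_top"
    and d: "0 < \<delta>" "\<delta> < 1"
  shows "eventually (\<lambda>t. mDelta (Gm F a) T t \<le> ((1 - a) + a / (1 - \<delta>) + a * B * (1 + 3 * \<delta>)) * mDelta F T t) at_top"
proof -
  obtain u0 where u0: "\<And>u. u \<ge> u0 \<Longrightarrow> mDelta (Gm F a) T u \<le> B * mDelta F T u"
    using P unfolding eventually_at_top_linorder by blast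
  obtain X where X: "X \<ge> 0" "\<And>x. x \<ge> X \<Longrightarrow> 1 - \<delta> \<le> measure F {..<x}"
    using dn_tail[OF dnF d(1)] by blast
  define x2 where "x2 = max u0 X"
  have x2: "0 \<le> x2" "1 - \<delta> \<le> measure F {..<x2}" using X by (auto simp: x2_def)
  obtain t0 where t0: "\<And>t. t \<ge> t0 \<Longrightarrow> mDelta F T t > 0 \<and> (\<forall>z\<in>{0..x2}. (1 - \<delta>) * mDelta F T t \<le> mDelta F T (t - z) \<and> (1 - \<delta>) * mDelta F T (t - z) \<le> mDelta F T t)"
    using UL[OF d x2(1)] by blast
  obtain tS where tS: "\<And>t. t \<ge> tS \<Longrightarrow> mDelta (F \<star> F) T t \<le> (2 + \<delta>) * mDelta F T t"
    using Shyp[OF S d(1)] unfolding eventually_at_top_linorder by blast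
  show ?thesis unfolding eventually_at_top_linorder
  proof (intro exI[of _ "max (max t0 tS) x2"] allI impI)
    fix t assume t: "max (max t0 tS) x2 \<le> t"
    show "mDelta (Gm F a) T t \<le> ((1 - a) + a / (1 - \<delta>) + a * B * (1 + 3 * \<delta>)) * mDelta F T t"
    proof (rule gstep[OF a d x2])
      show "\<forall>z\<in>{0..x2}. (1 - \<delta>) * mDelta F T t \<le> mDelta F T (t - z) \<and> (1 - \<delta>) * mDelta F T (t - z) \<le> mDelta F T t"
        using t0[of t] t by auto
      show "0 \<le> B" by fact
      show "\<And>u. x2 \<le> u \<Longrightarrow> u \<le> t \<Longrightarrow> mDelta (Gm F a) T u \<le> B * mDelta F T u"
        using u0 unfolding x2_def by auto
      show "mDelta (F \<star> F) T t \<le> (2 + \<delta>) * mDelta F T t" using tS t by auto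
    qed
  qed
qed

end

lemma arith2:
  fixes a B \<eta> :: real
  assumes a: "0 < a" "a < 1" and B: "0 \<le> B" and eta: "\<eta> > 0"
  shows "\<exists>\<delta>. 0 < \<delta> \<and> \<delta> < 1 \<and> (1 - a) + a / (1 - \<delta>) + a * B * (1 + 3 * \<delta>) \<le> 1 + \<eta> + a * B"
proof -
  define \<delta> where "\<delta> = min (1/2) (\<eta> / (2 + 3 * B))"
  have p23: "0 < 2 + 3 * B" using B by simp
  have "0 < \<eta> / (2 + 3 * B)" using eta p23 by (rule divide_pos_pos)
  then have d0: "0 < \<delta>" unfolding \<delta>_def by simp
  have d1: "\<delta> \<le> 1/2" unfolding \<delta>_def by (rule min.cobounded1)
  have d2: "\<delta> \<le> \<eta> / (2 + 3 * B)" unfolding \<delta>_def by (rule min.cobounded2)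
  then have d3: "\<delta> * (2 + 3 * B) \<le> \<eta>" by (subst (asm) pos_le_divide_eq[OF p23])
  have d4: "2 * \<delta> + 3 * B * \<delta> \<le> \<eta>" using d3 by (simp add: distrib_left mult.commute)
  have od: "0 < 1 - \<delta>" using d1 by simp
  have q1: "a / (1 - \<delta>) \<le> a + 2 * \<delta>"
  proof -
    have e: "(a + 2 * \<delta>) * (1 - \<delta>) - a = \<delta> * (2 - a - 2 * \<delta>)" by (simp add: algebra_simps)
    have "0 \<le> \<delta> * (2 - a - 2 * \<delta>)" using d0 d1 a by (intro mult_nonneg_nonneg) auto
    then have "a \<le> (a + 2 * \<delta>) * (1 - \<delta>)" using e by linarith
    then show ?thesis by (subst pos_divide_le_eq[OF od])
  qed
  have q2: "a * B * (1 + 3 * \<delta>) \<le> a * B + 3 * B * \<delta>"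
  proof -
    have "a * (B * (3 * \<delta>)) \<le> 1 * (B * (3 * \<delta>))" using a B d0 by (intro mult_right_mono) auto
    moreover have "a * B * (1 + 3 * \<delta>) = a * B + a * (B * (3 * \<delta>))" by (simp add: distrib_left)
    ultimately show ?thesis by simp
  qed
  have "(1 - a) + a / (1 - \<delta>) + a * B * (1 + 3 * \<delta>) \<le> 1 + \<eta> + a * B"
    using q1 q2 d4 by linarith
  then show ?thesis using d0 d1 by (intro exI[of _ \<delta>]) auto
qed

context LT begin

lemma step2:
  assumes S: "class_S T F" and a: "0 < a" "a < 1" and B: "0 \<le> B" and eta: "\<eta> > 0"
    and P: "eventually (\<lambda>t. mDelta (Gm F a) T t \<le> B * mDelta F T t) at_top"
  shows "eventually (\<lambda>t. mDelta (Gm F a) T t \<le> (1 + \<eta> + a * B) * mDelta F T t) at_top"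
proof -
  obtain \<delta> where d: "0 < \<delta>" "\<delta> < 1" "(1 - a) + a / (1 - \<delta>) + a * B * (1 + 3 * \<delta>) \<le> 1 + \<eta> + a * B"
    using arith2[OF a B eta] by blast
  have "eventually (\<lambda>t. mDelta (Gm F a) T t \<le> ((1 - a) + a / (1 - \<delta>) + a * B * (1 + 3 * \<delta>)) * mDelta F T t) at_top"
    by (rule step[OF S a B P d(1,2)])
  then show ?thesis by (rule Pmono) (rule d(3))
qed

end

context LT begin

lemma bounded:
  assumes S: "class_S T F" and a: "0 < a" "a < 1"
  shows "\<exists>B\<ge>0. eventually (\<lambda>t. mDelta (Gm F a) T t \<le> B * mDelta F T t) at_top"
proof -
  define \<delta> where "\<delta> = min (1/4) ((1 - a) / (6 * a))"
  have "0 < (1 - a) / (6 * a)" using a by simp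
  then have d0: "0 < \<delta>" unfolding \<delta>_def by simp
  have d1: "\<delta> \<le> 1/4" unfolding \<delta>_def by (rule min.cobounded1)
  have "\<delta> \<le> (1 - a) / (6 * a)" unfolding \<delta>_def by (rule min.cobounded2)
  then have d2: "\<delta> * (6 * a) \<le> 1 - a" using a by (subst (asm) pos_le_divide_eq) auto
  have dl1: "\<delta> < 1" using d1 by simp
  define \<rho> where "\<rho> = a * (1 + 3 * \<delta>)"
  have rho1: "\<rho> < 1"
  proof -
    have "\<rho> = a + (\<delta> * (6 * a)) / 2" unfolding \<rho>_def by (simp add: algebra_simps)
    then show ?thesis using d2 a by linarith
  qed
  have rho0: "0 \<le> \<rho>" using a d0 unfolding \<rho>_def by simp
  define K where "K = (1 - a) + a / (1 - \<delta>)"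
  obtain X where X: "X \<ge> 0" "\<And>x. x \<ge> X \<Longrightarrow> 1 - \<delta> \<le> measure F {..<x}"
    using dn_tail[OF dnF d0] by blast
  obtain y0 where y0: "\<forall>y\<ge>y0. mDelta F T y > 0 \<and> (\<forall>s\<in>{0..1}. \<bar>mDelta F T (y + s) / mDelta F T y - 1\<bar> < 1/2)"
    using L0[of "1/2"] by auto
  define x2 where "x2 = max X (max y0 0)"
  have x2: "0 \<le> x2" "1 - \<delta> \<le> measure F {..<x2}" using X by (auto simp: x2_def)
  have fp: "\<And>u. x2 \<le> u \<Longrightarrow> 0 < mDelta F T u" using y0 by (auto simp: x2_def)
  obtain t0 where t0: "\<And>t. t \<ge> t0 \<Longrightarrow> mDelta F T t > 0 \<and> (\<forall>z\<in>{0..x2}. (1 - \<delta>) * mDelta F T t \<le> mDelta F T (t - z) \<and> (1 - \<delta>) * mDelta F T (t - z) \<le> mDelta F T t)"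
    using UL[OF d0 dl1 x2(1)] by blast
  obtain tS where tS: "\<And>t. t \<ge> tS \<Longrightarrow> mDelta (F \<star> F) T t \<le> (2 + \<delta>) * mDelta F T t"
    using Shyp[OF S d0] unfolding eventually_at_top_linorder by blast
  define t1 where "t1 = max (max t0 tS) x2"
  define r where "r u = mDelta (Gm F a) T u / mDelta F T u" for u
  define R where "R t = Sup (r ` {x2..t})" for t
  have lowc: "\<And>t u. x2 \<le> u \<Longrightarrow> u \<le> t \<Longrightarrow> (1 - 1/2) ^ (nat \<lceil>t - x2\<rceil>) * mDelta F T x2 \<le> mDelta F T u"
  proof -
    fix t u assume h: "x2 \<le> u" "u \<le> t"
    have "(1 - 1/2) ^ (nat \<lceil>t - x2\<rceil>) * mDelta F T x2 \<le> mDelta F T (x2 + (u - x2))"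
      using chain_bound[where e="1/2" and f="mDelta F T", OF _ _ y0 f_nonneg, of x2 "u - x2" "nat \<lceil>t - x2\<rceil>"] h
      by (auto simp: x2_def) linarith
    then show "(1 - 1/2) ^ (nat \<lceil>t - x2\<rceil>) * mDelta F T x2 \<le> mDelta F T u" by simp
  qed
  have bdd: "\<And>t. bdd_above (r ` {x2..t})"
  proof -
    fix t
    define c where "c = (1 - 1/2) ^ (nat \<lceil>t - x2\<rceil>) * mDelta F T x2"
    have c0: "0 < c" unfolding c_def using fp[of x2] by simp
    show "bdd_above (r ` {x2..t})"
    proof (rule bdd_aboveI2)
      fix u assume u: "u \<in> {x2..t}"
      have fu: "0 < mDelta F T u" using fp u by auto
      have "r u \<le> 1 / mDelta F T u"
        unfolding r_def using fu mDelta_le1[OF G_dn[OF dnF a]] by (intro divide_right_mono) auto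
      also have "\<dots> \<le> 1 / c"
        using lowc[of u t] u c0 fu unfolding c_def by (intro divide_left_mono) auto
      finally show "r u \<le> 1 / c" .
    qed
  qed
  have Rup: "\<And>t u. x2 \<le> u \<Longrightarrow> u \<le> t \<Longrightarrow> r u \<le> R t"
    unfolding R_def by (rule cSup_upper) (auto intro: bdd)
  have gle: "\<And>t v. x2 \<le> v \<Longrightarrow> v \<le> t \<Longrightarrow> mDelta (Gm F a) T v \<le> R t * mDelta F T v"
  proof -
    fix t v assume h: "x2 \<le> v" "v \<le> t"
    have "r v \<le> R t" using Rup[OF h] .
    then show "mDelta (Gm F a) T v \<le> R t * mDelta F T v"
      unfolding r_def using fp[OF h(1)] by (simp add: pos_divide_le_eq)
  qed
  have R0: "\<And>t. x2 \<le> t \<Longrightarrow> 0 \<le> R t"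
  proof -
    fix t assume "x2 \<le> t"
    then have "r x2 \<le> R t" using Rup[of x2 t] by simp
    moreover have "0 \<le> r x2" unfolding r_def by (intro divide_nonneg_nonneg) (auto simp: mDelta_def)
    ultimately show "0 \<le> R t" by linarith
  qed
  have key: "\<And>t. t1 \<le> t \<Longrightarrow> R t \<le> max (R t1) (K / (1 - \<rho>))"
  proof -
    fix t assume t: "t1 \<le> t"
    have xt: "x2 \<le> t" using t by (simp add: t1_def)
    have all: "\<And>u. u \<in> {x2..t} \<Longrightarrow> r u \<le> max (R t1) (K + \<rho> * R t)"
    proof -
      fix u assume u: "u \<in> {x2..t}"
      show "r u \<le> max (R t1) (K + \<rho> * R t)"
      proof (cases "u \<le> t1")
        case True
        then have "r u \<le> R t1" using Rup[of u t1] u by auto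
        then show ?thesis by simp
      next
        case False
        have g: "mDelta (Gm F a) T u \<le> ((1 - a) + a / (1 - \<delta>) + a * R t * (1 + 3 * \<delta>)) * mDelta F T u"
        proof (rule gstep[OF a d0 dl1 x2(1) x2(2)])
          show "\<forall>z\<in>{0..x2}. (1 - \<delta>) * mDelta F T u \<le> mDelta F T (u - z) \<and> (1 - \<delta>) * mDelta F T (u - z) \<le> mDelta F T u"
            using t0[of u] False by (auto simp: t1_def)
          show "0 \<le> R t" by (rule R0[OF xt])
          show "\<And>v. x2 \<le> v \<Longrightarrow> v \<le> u \<Longrightarrow> mDelta (Gm F a) T v \<le> R t * mDelta F T v"
            using gle u by auto
          show "mDelta (F \<star> F) T u \<le> (2 + \<delta>) * mDelta F T u" using tS[of u] False by (auto simp: t1_def)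
        qed
        have e: "(1 - a) + a / (1 - \<delta>) + a * R t * (1 + 3 * \<delta>) = K + \<rho> * R t"
          unfolding K_def \<rho>_def by (simp add: mult.commute mult.left_commute)
        have "r u \<le> K + \<rho> * R t"
          unfolding r_def using g e fp[of u] u by (simp add: pos_divide_le_eq)
        then show ?thesis by simp
      qed
    qed
    have "Sup (r ` {x2..t}) \<le> max (R t1) (K + \<rho> * R t)"
      using xt all by (intro cSup_least) auto
    moreover have Rt: "R t = Sup (r ` {x2..t})" by (simp add: R_def)
    ultimately have "R t \<le> max (R t1) (K + \<rho> * R t)" by simp
    then show "R t \<le> max (R t1) (K / (1 - \<rho>))"
    proof (cases "R t \<le> R t1")
      case True then show ?thesis by simp
    next
      case False
      assume "R t \<le> max (R t1) (K + \<rho> * R t)"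
      with False have "R t \<le> K + \<rho> * R t" by simp
      then have "R t * (1 - \<rho>) \<le> K" by (simp add: algebra_simps)
      then have "R t \<le> K / (1 - \<rho>)" using rho1 by (simp add: pos_le_divide_eq)
      then show ?thesis by simp
    qed
  qed
  define B0 where "B0 = max (R t1) (K / (1 - \<rho>))"
  have B0: "0 \<le> B0" using R0[of t1] by (simp add: B0_def t1_def)
  have "eventually (\<lambda>t. mDelta (Gm F a) T t \<le> B0 * mDelta F T t) at_top"
    unfolding eventually_at_top_linorder
  proof (intro exI[of _ t1] allI impI)
    fix t assume t: "t1 \<le> t"
    have xt: "x2 \<le> t" using t by (simp add: t1_def)
    have "mDelta (Gm F a) T t \<le> R t * mDelta F T t" using gle[of t t] xt by simp
    also have "\<dots> \<le> B0 * mDelta F T t" using key[OF t] f_nonneg unfolding B0_def by (intro mult_right_mono)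
    finally show "mDelta (Gm F a) T t \<le> B0 * mDelta F T t" .
  qed
  then show ?thesis using B0 by blast
qed

end

context LT begin

lemma upper:
  assumes S: "class_S T F" and a: "0 < a" "a < 1" and e: "\<epsilon> > 0"
  shows "eventually (\<lambda>t. mDelta (Gm F a) T t \<le> (1 / (1 - a) + \<epsilon>) * mDelta F T t) at_top"
proof -
  obtain B0 where B0: "B0 \<ge> 0" "eventually (\<lambda>t. mDelta (Gm F a) T t \<le> B0 * mDelta F T t) at_top"
    using bounded[OF S a] by blast
  define \<eta> where "\<eta> = (1 - a) * (\<epsilon> / 2)"
  have eta: "\<eta> > 0" using a e by (simp add: \<eta>_def)
  define C where "C = (1 + \<eta>) / (1 - a)"
  have a1: "1 - a \<noteq> 0" using a by simp
  have C0: "0 \<le> C" using a eta by (simp add: C_def)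
  have Cv: "C = 1 / (1 - a) + \<epsilon> / 2"
  proof -
    have "C = 1 / (1 - a) + \<eta> / (1 - a)" unfolding C_def by (rule add_divide_distrib)
    moreover have "\<eta> / (1 - a) = \<epsilon> / 2" unfolding \<eta>_def by (rule nonzero_mult_div_cancel_left[OF a1])
    ultimately show ?thesis by simp
  qed
  have Cfix: "1 + \<eta> + a * C = C"
  proof -
    have "C * (1 - a) = 1 + \<eta>" unfolding C_def using a1 by simp
    then show ?thesis by (simp add: algebra_simps)
  qed
  have iter: "\<And>k. eventually (\<lambda>t. mDelta (Gm F a) T t \<le> (C + a ^ k * B0) * mDelta F T t) at_top"
  proof -
    fix k show "eventually (\<lambda>t. mDelta (Gm F a) T t \<le> (C + a ^ k * B0) * mDelta F T t) at_top"
    proof (induction k)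
      case 0
      show ?case by (rule Pmono[OF B0(2)]) (use C0 in simp)
    next
      case (Suc k)
      have nn: "0 \<le> C + a ^ k * B0" using C0 B0 a by simp
      have "eventually (\<lambda>t. mDelta (Gm F a) T t \<le> (1 + \<eta> + a * (C + a ^ k * B0)) * mDelta F T t) at_top"
        by (rule step2[OF S a nn eta Suc.IH])
      moreover have "1 + \<eta> + a * (C + a ^ k * B0) = C + a ^ Suc k * B0"
        using Cfix by (simp add: algebra_simps)
      ultimately show ?case by simp
    qed
  qed
  have "eventually (\<lambda>n. a ^ n < \<epsilon> / (2 * (B0 + 1))) sequentially"
    using B0 e a by (intro order_tendstoD(2)[OF LIMSEQ_power_zero]) auto
  then obtain k where k: "a ^ k < \<epsilon> / (2 * (B0 + 1))" unfolding eventually_sequentially by blast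
  have k2: "a ^ k * (2 * (B0 + 1)) < \<epsilon>" using k B0 by (subst (asm) pos_less_divide_eq) auto
  have "a ^ k * (2 * (B0 + 1)) = 2 * (a ^ k * (B0 + 1))" by (simp add: algebra_simps)
  then have "a ^ k * (B0 + 1) < \<epsilon> / 2" using k2 by linarith
  moreover have "a ^ k * B0 \<le> a ^ k * (B0 + 1)" using a by (intro mult_left_mono) auto
  ultimately have "C + a ^ k * B0 \<le> 1 / (1 - a) + \<epsilon>" using Cv by linarith
  then show ?thesis by (rule Pmono[OF iter])
qed

lemma forward:
  assumes S: "class_S T F" and a: "0 < a" "a < 1"
  shows "(\<lambda>t. mDelta (Gm F a) T t) \<sim>[at_top] (\<lambda>t. mDelta F T t / (1 - a))"
proof (rule asympI)
  show "eventually (\<lambda>t. mDelta F T t / (1 - a) > 0) at_top"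
    using fpos by eventually_elim (use a in simp)
  fix e :: real assume e: "e > 0"
  have a1: "0 < 1 - a" using a by simp
  have lo: "eventually (\<lambda>t. ((1 - e) / (1 - a)) * mDelta F T t \<le> mDelta (Gm F a) T t) at_top"
    using e a1 by (intro g_lower[OF a] divide_strict_right_mono) auto
  have hi: "eventually (\<lambda>t. mDelta (Gm F a) T t \<le> (1 / (1 - a) + e / (1 - a)) * mDelta F T t) at_top"
    using e a1 by (intro upper[OF S a] divide_pos_pos) auto
  show "eventually (\<lambda>t. \<bar>mDelta (Gm F a) T t - mDelta F T t / (1 - a)\<bar> \<le> e * (mDelta F T t / (1 - a))) at_top"
    using lo hi
  proof eventually_elim
    case (elim t)
    let ?f = "mDelta F T t"
    have e1: "((1 - e) / (1 - a)) * ?f = ?f / (1 - a) - e * (?f / (1 - a))"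
      by (simp add: diff_divide_distrib algebra_simps)
    have e2: "(1 / (1 - a) + e / (1 - a)) * ?f = ?f / (1 - a) + e * (?f / (1 - a))"
      by (simp add: algebra_simps)
    have l: "?f / (1 - a) - e * (?f / (1 - a)) \<le> mDelta (Gm F a) T t" using elim(1) unfolding e1 .
    have u: "mDelta (Gm F a) T t \<le> ?f / (1 - a) + e * (?f / (1 - a))" using elim(2) unfolding e2 .
    show ?case by (rule abs_leI) (use l u in linarith)+
  qed
qed

end

theorem theorem8:
  fixes F :: "real measure" and a :: real and T :: ereal
  assumes "distr_nonneg F"
    and "0 < a" and "a < 1"
    and "0 < T"
    and "class_L T F"
  shows "class_S T F \<longleftrightarrow>
         ((\<lambda>t. mean_diff F a T t) \<sim>[at_top] (\<lambda>t. mDelta F T t / (1 - a)))"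
proof -
  interpret LT F T using assms(1,4,5) by unfold_locales
  have eq: "(\<lambda>t. mean_diff F a T t) = (\<lambda>t. mDelta (Gm F a) T t)"
    by (rule ext, rule mean_diff_G[OF assms(1,4,2,3)])
  show ?thesis unfolding eq using forward[OF _ assms(2,3)] converse[OF assms(2,3)] by blast
qed

end
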